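(* Consider the following chemical reaction network (the ERK cascade without feedback in which MEK and ERK share the same phosphatase PH) with 21 species RAF, pRAF, MEK, pMEK, ppMEK, ERK, pERK, ppERK, RAS, RAFPH, PH, RAS-RAF, MEK-pRAF, pMEK-pRAF, ERK-ppMEK, pERK-ppMEK, RAF-RAFPH, ppMEK-PH, pMEK-PH, ppERK-PH, pERK-PH and 30 reactions with rate constants $k_1,\dots,k_{30}$: RAF + RAS $\underset{k_2}{\overset{k_1}{\rightleftarrows}}$ RAS-RAF $\overset{k_3}{\to}$ pRAF + RAS; pRAF + RAFPH $\underset{k_5}{\overset{k_4}{\rightleftarrows}}$ RAF-RAFPH $\overset{k_6}{\to}$ RAF + RAFPH; MEK + pRAF $\underset{k_8}{\overset{k_7}{\rightleftarrows}}$ MEK-pRAF $\overset{k_9}{\to}$ pMEK + pRAF $\underset{k_{11}}{\overset{k_{10}}{\rightleftarrows}}$ pMEK-pRAF $\overset{k_{12}}{\to}$ ppMEK + pRAF; ppMEK + PH $\underset{k_{14}}{\overset{k_{13}}{\rightleftarrows}}$ ppMEK-PH $\overset{k_{15}}{\to}$ pMEK + PH $\underset{k_{17}}{\overset{k_{16}}{\rightleftarrows}}$ pMEK-PH $\overset{k_{18}}{\to}$ MEK + PH; ERK + ppMEK $\underset{k_{20}}{\overset{k_{19}}{\rightleftarrows}}$ ERK-ppMEK $\overset{k_{21}}{\to}$ pERK + ppMEK $\underset{k_{23}}{\overset{k_{22}}{\rightleftarrows}}$ pERK-ppMEK $\overset{k_{24}}{\to}$ ppERK + ppMEK; ppERK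 + PH $\underset{k_{26}}{\overset{k_{25}}{\rightleftarrows}}$ ppERK-PH $\overset{k_{27}}{\to}$ pERK + PH $\underset{k_{29}}{\overset{k_{28}}{\rightleftarrows}}$ pERK-PH $\overset{k_{30}}{\to}$ ERK + PH. Then the associated mass-action system has the capacity for multistationarity: there exist positive rate constants $k\in\mathbb{R}^{30}_{>0}$ and a stoichiometric compatibility class containing two distinct positive steady states, and these can be chosen so that both steady states are stable.
   Context: For a reaction network with species concentrations $x\in\mathbb{R}^s$ and reactions $y\to y'$ (complexes $y,y'\in\mathbb{Z}_{\ge0}^s$) with positive rate constants, the mass-action system is $\dot x=\sum_{y\to y'}k_{y\to y'}x^{y}(y'-y)$. The stoichiometric subspace $\mathcal{S}$ is the span of all reaction vectors $y'-y$; the stoichiometric compatibility class of $x^0\in\mathbb{R}^s_{>0}$ is $(x^0+\mathcal{S})\cap\mathbb{R}^s_{\ge0}$, which is forward invariant. A positive steady state is $x\in\mathbb{R}^s_{>0}$ with $\dot x=0$. The system exhibits multistationarity if some stoichiometric compatibility class contains two or more steady states in its relative interior; a network has the capacity for multistationarity if this happens for some choice of positive rate constants. Stability of a steady state is understood for the dynamics restricted to its stoichiometric compatibility class. *)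

theory Defs
  imports "HOL-Analysis.Analysis"
begin

datatype species =
    RAF | pRAF | MEK | pMEK | ppMEK | ERK | pERK | ppERK | RAS | RAFPH | PH
  | RAS_RAF | MEK_pRAF | pMEK_pRAF | ERK_ppMEK | pERK_ppMEK | RAF_RAFPH
  | ppMEK_PH | pMEK_PH | ppERK_PH | pERK_PH

lemma UNIV_species:
  "(UNIV :: species set) = {RAF, pRAF, MEK, pMEK, ppMEK, ERK, pERK, ppERK, RAS, RAFPH, PH,
     RAS_RAF, MEK_pRAF, pMEK_pRAF, ERK_ppMEK, pERK_ppMEK, RAF_RAFPH,
     ppMEK_PH, pMEK_PH, ppERK_PH, pERK_PH}"
  by (auto intro: species.exhaust)

instance species :: finite
  by standard (simp add: UNIV_species)

definition cplx :: "species list \<Rightarrow> species \<Rightarrow> nat" where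
  "cplx xs s = count_list xs s"

text \<open>The 30 reactions, listed in the order of the rate constants k1..k30
  (index i in 0..29 corresponds to rate constant k_(i+1)).\<close>

definition erk_reactions :: "(species list \<times> species list) list" where
  "erk_reactions = [
    ([RAF, RAS], [RAS_RAF]),            \<comment> \<open>k1\<close>
    ([RAS_RAF], [RAF, RAS]),            \<comment> \<open>k2\<close>
    ([RAS_RAF], [pRAF, RAS]),           \<comment> \<open>k3\<close>
    ([pRAF, RAFPH], [RAF_RAFPH]),       \<comment> \<open>k4\<close>
    ([RAF_RAFPH], [pRAF, RAFPH]),       \<comment> \<open>k5\<close>
    ([RAF_RAFPH], [RAF, RAFPH]),        \<comment> \<open>k6\<close>
    ([MEK, pRAF], [MEK_pRAF]),          \<comment> \<open>k7\<close>
    ([MEK_pRAF], [MEK, pRAF]),          \<comment> \<open>k8\<close>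
    ([MEK_pRAF], [pMEK, pRAF]),         \<comment> \<open>k9\<close>
    ([pMEK, pRAF], [pMEK_pRAF]),        \<comment> \<open>k10\<close>
    ([pMEK_pRAF], [pMEK, pRAF]),        \<comment> \<open>k11\<close>
    ([pMEK_pRAF], [ppMEK, pRAF]),       \<comment> \<open>k12\<close>
    ([ppMEK, PH], [ppMEK_PH]),          \<comment> \<open>k13\<close>
    ([ppMEK_PH], [ppMEK, PH]),          \<comment> \<open>k14\<close>
    ([ppMEK_PH], [pMEK, PH]),           \<comment> \<open>k15\<close>
    ([pMEK, PH], [pMEK_PH]),            \<comment> \<open>k16\<close>
    ([pMEK_PH], [pMEK, PH]),            \<comment> \<open>k17\<close>
    ([pMEK_PH], [MEK, PH]),             \<comment> \<open>k18\<close>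
    ([ERK, ppMEK], [ERK_ppMEK]),        \<comment> \<open>k19\<close>
    ([ERK_ppMEK], [ERK, ppMEK]),        \<comment> \<open>k20\<close>
    ([ERK_ppMEK], [pERK, ppMEK]),       \<comment> \<open>k21\<close>
    ([pERK, ppMEK], [pERK_ppMEK]),      \<comment> \<open>k22\<close>
    ([pERK_ppMEK], [pERK, ppMEK]),      \<comment> \<open>k23\<close>
    ([pERK_ppMEK], [ppERK, ppMEK]),     \<comment> \<open>k24\<close>
    ([ppERK, PH], [ppERK_PH]),          \<comment> \<open>k25\<close>
    ([ppERK_PH], [ppERK, PH]),          \<comment> \<open>k26\<close>
    ([ppERK_PH], [pERK, PH]),           \<comment> \<open>k27\<close>
    ([pERK, PH], [pERK_PH]),            \<comment> \<open>k28\<close>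
    ([pERK_PH], [pERK, PH]),            \<comment> \<open>k29\<close>
    ([pERK_PH], [ERK, PH])              \<comment> \<open>k30\<close>
  ]"

definition rvec :: "nat \<Rightarrow> real ^ species" where
  "rvec i = (\<chi> s. real (cplx (snd (erk_reactions ! i)) s) - real (cplx (fst (erk_reactions ! i)) s))"

definition rmono :: "nat \<Rightarrow> real ^ species \<Rightarrow> real" where
  "rmono i x = (\<Prod>s\<in>UNIV. (x $ s) ^ cplx (fst (erk_reactions ! i)) s)"

definition fld :: "(nat \<Rightarrow> real) \<Rightarrow> real ^ species \<Rightarrow> real ^ species" where
  "fld k x = (\<Sum>i<length erk_reactions. (k i * rmono i x) *\<^sub>R rvec i)"

definition stoich :: "(real ^ species) set" where
  "stoich = span (rvec ` {..<length erk_reactions})"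

definition compat_class :: "real ^ species \<Rightarrow> (real ^ species) set" where
  "compat_class x0 = {z. z - x0 \<in> stoich \<and> (\<forall>s. 0 \<le> z $ s)}"

definition positive_steady_state :: "(nat \<Rightarrow> real) \<Rightarrow> real ^ species \<Rightarrow> bool" where
  "positive_steady_state k x \<longleftrightarrow> (\<forall>s. 0 < x $ s) \<and> fld k x = 0"

definition is_solution :: "(nat \<Rightarrow> real) \<Rightarrow> (real \<Rightarrow> real ^ species) \<Rightarrow> real ^ species \<Rightarrow> bool" where
  "is_solution k phi z \<longleftrightarrow> phi 0 = z \<and>
     (\<forall>t\<ge>0. (phi has_vector_derivative fld k (phi t)) (at t within {0..}))"

definition asympt_stable :: "(nat \<Rightarrow> real) \<Rightarrow> real ^ species \<Rightarrow> bool" where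
  "asympt_stable k xs \<longleftrightarrow>
     (\<forall>\<epsilon>>0. \<exists>\<delta>>0. \<forall>z phi. z \<in> compat_class xs \<and> dist z xs < \<delta> \<and> is_solution k phi z
        \<longrightarrow> (\<forall>t\<ge>0. dist (phi t) xs < \<epsilon>)) \<and>
     (\<exists>\<delta>>0. \<forall>z phi. z \<in> compat_class xs \<and> dist z xs < \<delta> \<and> is_solution k phi z
        \<longrightarrow> (phi \<longlongrightarrow> xs) at_top)"

end

theory Submission
  imports Defs
begin

lemma nonincr_on:
  fixes h :: "real \<Rightarrow> real"
  assumes "a \<le> b" "continuous_on {a..b} h"
    "\<And>t. a < t \<Longrightarrow> t < b \<Longrightarrow> (h has_real_derivative h' t) (at t)"
    "\<And>t. a < t \<Longrightarrow> t < b \<Longrightarrow> h' t \<le> 0"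
  shows "h b \<le> h a"
proof (cases "a = b")
  case True then show ?thesis by simp
next
  case False
  with assms(1) have ab: "a < b" by simp
  have "\<And>t. a < t \<Longrightarrow> t < b \<Longrightarrow> (h has_derivative (\<lambda>d. h' t * d)) (at t)"
    using assms(3) by (simp add: has_field_derivative_def)
  from mvt[OF ab assms(2) this] obtain \<xi> where xi: "a < \<xi>" "\<xi> < b" "h b - h a = h' \<xi> * (b - a)"
    by blast
  have "h' \<xi> * (b - a) \<le> 0" using assms(4)[OF xi(1,2)] ab by (simp add: mult_nonpos_nonneg)
  then show ?thesis using xi(3) by simp
qed

lemma comp_deriv:
  assumes "(phi has_vector_derivative p) (at t within S)" "(G has_derivative G') (at (phi t))"
  shows "((\<lambda>t. G (phi t)) has_real_derivative G' p) (at t within S)"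
proof -
  have lin: "linear G'" using assms(2) has_derivative_bounded_linear bounded_linear.linear by blast
  have "((G \<circ> phi) has_derivative (G' \<circ> (\<lambda>x. x *\<^sub>R p))) (at t within S)"
    using diff_chain_within[OF assms(1)[unfolded has_vector_derivative_def] has_derivative_at_withinI[OF assms(2)]] .
  moreover have "(G' \<circ> (\<lambda>x. x *\<^sub>R p)) = (\<lambda>x. G' p * x)"
    using linear_scale[OF lin] by (auto simp: o_def mult.commute)
  ultimately show ?thesis by (simp add: has_field_derivative_def o_def)
qed

lemma sol_deriv:
  assumes "is_solution k phi z" "0 \<le> t"
  shows "(phi has_vector_derivative fld k (phi t)) (at t within {0..})"
  using assms by (simp add: is_solution_def)

lemma sol_deriv_at:
  assumes "is_solution k phi z" "0 < t"
  shows "(phi has_vector_derivative fld k (phi t)) (at t)"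
proof -
  have "at t within {0..} = at t" using assms(2) by (intro at_within_interior) simp
  then show ?thesis using sol_deriv[OF assms(1) less_imp_le[OF assms(2)]] by simp
qed

lemma sol_cont:
  assumes "is_solution k phi z"
  shows "continuous_on {0..} phi"
proof -
  have "\<And>t. t \<in> {0..} \<Longrightarrow> continuous (at t within {0..}) phi"
    using sol_deriv[OF assms] has_vector_derivative_continuous by force
  then show ?thesis by (simp add: continuous_on_eq_continuous_within)
qed

lemma sol_cont_comp:
  assumes "is_solution k phi z" "\<And>v. (G has_derivative G' v) (at v)"
  shows "continuous_on {0..} (\<lambda>t. G (phi t))"
proof -
  have "continuous_on UNIV G"
    using assms(2) has_derivative_continuous by (metis continuous_at_imp_continuous_on)
  then show ?thesis using sol_cont[OF assms(1)]
    by (metis continuous_on_compose2 subset_UNIV)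
qed

lemma inner_fld: 
  assumes "\<And>i. i < 30 \<Longrightarrow> w \<bullet> rvec i = 0"
  shows "w \<bullet> fld k x = 0"
proof -
  have "length erk_reactions = 30" by (simp add: erk_reactions_def)
  then have "w \<bullet> fld k x = (\<Sum>i<30. (k i * rmono i x) * (w \<bullet> rvec i))"
    by (simp add: fld_def inner_sum_right)
  also have "\<dots> = 0" using assms by (intro sum.neutral) simp
  finally show ?thesis .
qed

lemma conserv_stoich:
  assumes "\<And>i. i < 30 \<Longrightarrow> w \<bullet> rvec i = 0" "v \<in> stoich"
  shows "w \<bullet> v = 0"
proof -
  have "span (rvec ` {..<length erk_reactions}) \<subseteq> {v. w \<bullet> v = 0}"
  proof (rule span_minimal)
    show "rvec ` {..<length erk_reactions} \<subseteq> {v. w \<bullet> v = 0}"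
      using assms(1) by (auto simp: erk_reactions_def)
    show "subspace {v. w \<bullet> v = 0}"
      by (auto simp: subspace_def inner_add_right)
  qed
  then show ?thesis using assms(2) by (auto simp: stoich_def)
qed

lemma conserv_sol:
  assumes "\<And>i. i < 30 \<Longrightarrow> w \<bullet> rvec i = 0" "is_solution k phi z" "0 \<le> t"
  shows "w \<bullet> phi t = w \<bullet> z"
proof -
  have G: "\<And>v. ((\<lambda>y. w \<bullet> y) has_derivative (\<lambda>h. w \<bullet> h)) (at v)"
    by (intro derivative_eq_intros) auto
  have cont: "continuous_on {0..t} (\<lambda>s. w \<bullet> phi s)"
    using sol_cont_comp[OF assms(2) G] by (rule continuous_on_subset) auto
  have der: "((\<lambda>s. w \<bullet> phi s) has_real_derivative 0) (at s)" if "0 < s" for s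
    using comp_deriv[OF sol_deriv_at[OF assms(2) that] G] inner_fld[OF assms(1)] by simp
  have "w \<bullet> phi t \<le> w \<bullet> phi 0"
    by (rule nonincr_on[OF assms(3) cont der]) auto
  moreover have "- (w \<bullet> phi t) \<le> - (w \<bullet> phi 0)"
    by (rule nonincr_on[where h'="\<lambda>_. 0", OF assms(3)])
       (auto intro!: continuous_intros cont derivative_eq_intros der)
  moreover have "phi 0 = z" using assms(2) by (simp add: is_solution_def)
  ultimately show ?thesis by simp
qed

lemma lyap_stable:
  fixes xs :: "real^species" and Vf :: "real^species \<Rightarrow> real"
    and DV :: "real^species \<Rightarrow> real^species \<Rightarrow> real" and Kset :: "(real^species) set"
  assumes deriv: "\<And>v. (Vf has_derivative DV v) (at v)"
  and inv: "\<And>z phi t. z \<in> compat_class xs \<Longrightarrow> is_solution k phi z \<Longrightarrow> 0 \<le> t \<Longrightarrow> phi t - xs \<in> Kset"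
  and mpos: "0 < m" and Mpos: "0 < M" and cpos: "0 < c" and rpos: "0 < r"
  and lower: "\<And>v. v \<in> Kset \<Longrightarrow> m * (norm v)^2 \<le> Vf v"
  and upper: "\<And>v. v \<in> Kset \<Longrightarrow> Vf v \<le> M * (norm v)^2"
  and decr: "\<And>v. v \<in> Kset \<Longrightarrow> norm v < r \<Longrightarrow> DV v (fld k (xs + v)) \<le> - c * (norm v)^2"
  shows "asympt_stable k xs"
proof -
  have G: "((\<lambda>y. Vf (y - xs)) has_derivative DV (y - xs)) (at y)" for y
  proof -
    have "((\<lambda>y. y - xs) has_derivative (\<lambda>h. h)) (at y)"
      by (intro derivative_eq_intros) auto
    from diff_chain_at[OF this deriv] show ?thesis by (simp add: o_def)
  qed
  have gcont: "continuous_on {0..} (\<lambda>t. Vf (phi t - xs))" if "is_solution k phi z" for phi z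
    using sol_cont_comp[OF that G] .
  have gder: "((\<lambda>t. Vf (phi t - xs)) has_real_derivative DV (phi t - xs) (fld k (phi t))) (at t)"
    if "is_solution k phi z" "0 < t" for phi z t
    using comp_deriv[OF sol_deriv_at[OF that] G] .
  have fldeq: "fld k (phi t) = fld k (xs + (phi t - xs))" for phi :: "real \<Rightarrow> real^species" and t :: real
    by simp
  have trap: "\<forall>t\<ge>0. norm (phi t - xs) < \<rho>"
    if zc: "z \<in> compat_class xs" and sol: "is_solution k phi z" and rho: "0 < \<rho>" "\<rho> \<le> r"
      and V0: "Vf (z - xs) < m * \<rho>^2" for z phi \<rho>
  proof (rule ccontr)
    assume "\<not> ?thesis"
    then obtain t0 where t0: "0 \<le> t0" "\<rho> \<le> norm (phi t0 - xs)" by (auto simp: not_less)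
    have phi0: "phi 0 = z" using sol by (simp add: is_solution_def)
    have z0: "norm (z - xs) < \<rho>"
    proof -
      have "z - xs \<in> Kset" using inv[OF zc sol, of 0] phi0 by simp
      then have "m * (norm (z - xs))^2 < m * \<rho>^2" using lower V0 by (meson le_less_trans)
      then have "(norm (z - xs))^2 < \<rho>^2" using mpos by simp
      then show ?thesis using rho by (smt (verit) power_mono norm_ge_zero)
    qed
    define S where "S = {0..t0} \<inter> (\<lambda>t. norm (phi t - xs)) -` {\<rho>..}"
    have contphi: "continuous_on {0..t0} (\<lambda>t. norm (phi t - xs))"
      using sol_cont[OF sol] by (intro continuous_intros) (auto elim: continuous_on_subset)
    have cS: "closed S" unfolding S_def
      by (rule continuous_closed_preimage[OF contphi]) auto
    have t0S: "t0 \<in> S" using t0 by (simp add: S_def)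
    have bS: "bdd_below S" by (rule bdd_belowI[of _ 0]) (auto simp: S_def)
    define t1 where "t1 = Inf S"
    have t1S: "t1 \<in> S" unfolding t1_def using closed_contains_Inf[OF _ bS cS] t0S by blast
    have t1nn: "0 \<le> t1" "t1 \<le> t0" and t1n: "\<rho> \<le> norm (phi t1 - xs)" using t1S by (auto simp: S_def)
    have below: "norm (phi t - xs) < \<rho>" if "0 \<le> t" "t < t1" for t
    proof (rule ccontr)
      assume "\<not> ?thesis"
      then have "t \<in> S" using that t1nn by (auto simp: S_def)
      then have "t1 \<le> t" unfolding t1_def using bS by (rule cInf_lower)
      then show False using that by simp
    qed
    have t1pos: "0 < t1"
    proof (rule ccontr)
      assume "\<not> 0 < t1" then have "t1 = 0" using t1nn by simp
      then show False using t1n z0 phi0 by simp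
    qed
    have "Vf (phi t1 - xs) \<le> Vf (phi 0 - xs)"
    proof (rule nonincr_on[OF t1nn(1)])
      show "continuous_on {0..t1} (\<lambda>t. Vf (phi t - xs))"
        using gcont[OF sol] by (rule continuous_on_subset) auto
      show "((\<lambda>t. Vf (phi t - xs)) has_real_derivative DV (phi t - xs) (fld k (phi t))) (at t)"
        if "0 < t" "t < t1" for t using gder[OF sol that(1)] .
      show "DV (phi t - xs) (fld k (phi t)) \<le> 0" if "0 < t" "t < t1" for t
      proof -
        have K: "phi t - xs \<in> Kset" using inv[OF zc sol] that by simp
        have "norm (phi t - xs) < r" using below[of t] that rho by simp
        then have "DV (phi t - xs) (fld k (phi t)) \<le> - c * (norm (phi t - xs))^2"
          using decr[OF K] fldeq by metis
        also have "\<dots> \<le> 0" using cpos by simp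
        finally show ?thesis .
      qed
    qed
    moreover have "m * \<rho>^2 \<le> Vf (phi t1 - xs)"
    proof -
      have "phi t1 - xs \<in> Kset" using inv[OF zc sol t1nn(1)] .
      then have "m * (norm (phi t1 - xs))^2 \<le> Vf (phi t1 - xs)" by (rule lower)
      moreover have "\<rho>^2 \<le> (norm (phi t1 - xs))^2" using t1n rho by (simp add: power_mono)
      ultimately show ?thesis using mpos by (smt (verit) mult_left_mono)
    qed
    ultimately show False using V0 phi0 by simp
  qed
  have startV: "Vf (z - xs) < m * \<rho>^2"
    if zc: "z \<in> compat_class xs" "is_solution k phi z" "0 < \<rho>" "dist z xs < \<rho> * sqrt (m / M)" for z phi \<rho>
  proof -
    have phi0: "phi 0 = z" using zc by (simp add: is_solution_def)
    have "z - xs \<in> Kset" using inv[OF zc(1,2), of 0] phi0 by simp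
    then have "Vf (z - xs) \<le> M * (norm (z - xs))^2" by (rule upper)
    also have "\<dots> < M * (\<rho> * sqrt (m / M))^2"
      using zc(4) Mpos by (intro mult_strict_left_mono power_strict_mono) (auto simp: dist_norm)
    also have "\<dots> = m * \<rho>^2" using Mpos mpos by (simp add: power_mult_distrib)
    finally show ?thesis .
  qed
  have part1: "\<forall>\<epsilon>>0. \<exists>\<delta>>0. \<forall>z phi. z \<in> compat_class xs \<and> dist z xs < \<delta> \<and> is_solution k phi z
        \<longrightarrow> (\<forall>t\<ge>0. dist (phi t) xs < \<epsilon>)"
  proof (intro allI impI)
    fix \<epsilon> :: real assume eps: "0 < \<epsilon>"
    define \<rho> where "\<rho> = min \<epsilon> r"
    have rho: "0 < \<rho>" "\<rho> \<le> r" "\<rho> \<le> \<epsilon>" using eps rpos by (auto simp: \<rho>_def)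
    show "\<exists>\<delta>>0. \<forall>z phi. z \<in> compat_class xs \<and> dist z xs < \<delta> \<and> is_solution k phi z
        \<longrightarrow> (\<forall>t\<ge>0. dist (phi t) xs < \<epsilon>)"
    proof (intro exI[of _ "\<rho> * sqrt (m / M)"] conjI allI impI)
      show "0 < \<rho> * sqrt (m / M)" using rho mpos Mpos by simp
      fix z and phi :: "real \<Rightarrow> real^species" and t :: real
      assume H: "z \<in> compat_class xs \<and> dist z xs < \<rho> * sqrt (m / M) \<and> is_solution k phi z"
        and t: "0 \<le> t"
      have "norm (phi t - xs) < \<rho>"
        using trap[OF _ _ rho(1,2) startV[OF _ _ rho(1)]] H t by blast
      then show "dist (phi t) xs < \<epsilon>" using rho by (simp add: dist_norm)
    qed
  qed
  have part2: "\<exists>\<delta>>0. \<forall>z phi. z \<in> compat_class xs \<and> dist z xs < \<delta> \<and> is_solution k phi z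
        \<longrightarrow> (phi \<longlongrightarrow> xs) at_top"
  proof (intro exI[of _ "r * sqrt (m / M)"] conjI allI impI)
    show "0 < r * sqrt (m / M)" using rpos mpos Mpos by simp
    fix z and phi :: "real \<Rightarrow> real^species"
    assume H: "z \<in> compat_class xs \<and> dist z xs < r * sqrt (m / M) \<and> is_solution k phi z"
    then have zc: "z \<in> compat_class xs" and sol: "is_solution k phi z" by auto
    have tr: "\<forall>t\<ge>0. norm (phi t - xs) < r"
      using trap[OF zc sol rpos order_refl startV[OF zc sol rpos]] H by blast
    define \<alpha> where "\<alpha> = c / M"
    have apos: "0 < \<alpha>" using cpos Mpos by (simp add: \<alpha>_def)
    define g0 where "g0 = Vf (z - xs)"
    have phi0: "phi 0 = z" using sol by (simp add: is_solution_def)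
    have decay: "m * (norm (phi t - xs))^2 \<le> g0 * exp (- \<alpha> * t)" if t: "0 \<le> t" for t
    proof -
      have "exp (\<alpha> * t) * Vf (phi t - xs) \<le> exp (\<alpha> * 0) * Vf (phi 0 - xs)"
      proof (rule nonincr_on[OF t, where h'="\<lambda>s. exp (\<alpha> * s) * (\<alpha> * Vf (phi s - xs) + DV (phi s - xs) (fld k (phi s)))"])
        show "continuous_on {0..t} (\<lambda>s. exp (\<alpha> * s) * Vf (phi s - xs))"
          using gcont[OF sol] by (intro continuous_intros) (auto elim: continuous_on_subset)
        show "((\<lambda>s. exp (\<alpha> * s) * Vf (phi s - xs)) has_real_derivative
            exp (\<alpha> * s) * (\<alpha> * Vf (phi s - xs) + DV (phi s - xs) (fld k (phi s)))) (at s)"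
          if "0 < s" "s < t" for s
          using gder[OF sol that(1)]
          by (auto intro!: derivative_eq_intros simp: algebra_simps)
        show "exp (\<alpha> * s) * (\<alpha> * Vf (phi s - xs) + DV (phi s - xs) (fld k (phi s))) \<le> 0"
          if "0 < s" "s < t" for s
        proof -
          have K: "phi s - xs \<in> Kset" using inv[OF zc sol] that by simp
          have "norm (phi s - xs) < r" using tr that by simp
          then have "DV (phi s - xs) (fld k (phi s)) \<le> - c * (norm (phi s - xs))^2"
            using decr[OF K] fldeq by metis
          moreover have "\<alpha> * Vf (phi s - xs) \<le> c * (norm (phi s - xs))^2"
            using upper[OF K] Mpos cpos by (simp add: \<alpha>_def field_simps)
          ultimately have "\<alpha> * Vf (phi s - xs) + DV (phi s - xs) (fld k (phi s)) \<le> 0" by simp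
          then show ?thesis by (simp add: mult_nonneg_nonpos)
        qed
      qed
      then have "Vf (phi t - xs) \<le> g0 * exp (- \<alpha> * t)"
        using phi0 by (simp add: g0_def exp_minus field_simps)
      moreover have "m * (norm (phi t - xs))^2 \<le> Vf (phi t - xs)"
        using lower inv[OF zc sol t] by blast
      ultimately show ?thesis by simp
    qed
    have lim0: "((\<lambda>t. sqrt (g0 / m * exp (- \<alpha> * t))) \<longlongrightarrow> 0) at_top"
    proof -
      have f: "filterlim (\<lambda>t. - \<alpha> * t) at_bot at_top"
        by (rule filterlim_tendsto_neg_mult_at_bot[OF tendsto_const]) (use apos in \<open>auto intro: filterlim_ident\<close>)
      have e: "((\<lambda>t. exp (- \<alpha> * t)) \<longlongrightarrow> 0) at_top"
        using filterlim_compose[OF exp_at_bot f] by (simp add: o_def)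
      have "((\<lambda>t. g0 / m * exp (- \<alpha> * t)) \<longlongrightarrow> g0 / m * 0) at_top"
        by (intro tendsto_intros e)
      then show ?thesis using tendsto_real_sqrt by fastforce
    qed
    have "((\<lambda>t. phi t - xs) \<longlongrightarrow> 0) at_top"
    proof (rule Lim_null_comparison[OF _ lim0])
      show "\<forall>\<^sub>F t in at_top. norm (phi t - xs) \<le> sqrt (g0 / m * exp (- \<alpha> * t))"
        using eventually_ge_at_top[of 0]
      proof (rule eventually_mono)
        fix t :: real assume t: "0 \<le> t"
        have "(norm (phi t - xs))^2 \<le> g0 / m * exp (- \<alpha> * t)"
          using decay[OF t] mpos by (simp add: field_simps)
        then show "norm (phi t - xs) \<le> sqrt (g0 / m * exp (- \<alpha> * t))"
          using real_le_rsqrt by blast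
      qed
    qed
    then show "(phi \<longlongrightarrow> xs) at_top" by (simp add: LIM_zero_iff)
  qed
  show ?thesis unfolding asympt_stable_def using part1 part2 by blast
qed

lemma prod_count_list:
  "(\<Prod>s\<in>UNIV. (x $ s) ^ count_list ys s) = prod_list (map (\<lambda>s. x $ s) ys)"
proof (induction ys)
  case Nil then show ?case by simp
next
  case (Cons a ys)
  have "(\<Prod>s\<in>UNIV. (x $ s) ^ count_list (a#ys) s) =
        (\<Prod>s\<in>UNIV. (x $ s) ^ (if a = s then 1 else 0) * (x $ s) ^ count_list ys s)"
    by (rule prod.cong) (auto simp: power_add)
  also have "\<dots> = (\<Prod>s\<in>UNIV. (x $ s) ^ (if a = s then 1 else 0)) * (\<Prod>s\<in>UNIV. (x $ s) ^ count_list ys s)"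
    by (rule prod.distrib)
  also have "(\<Prod>s\<in>UNIV. (x $ s) ^ (if a = s then 1 else 0)) = x $ a"
    by (simp add: if_distrib prod.If_cases)
  finally show ?case using Cons by simp
qed

lemma rmono_eq: "rmono i x = prod_list (map (\<lambda>s. x $ s) (fst (erk_reactions ! i)))"
  by (simp add: rmono_def cplx_def prod_count_list)

lemma len_R: "length erk_reactions = 30" by (simp add: erk_reactions_def)

lemma upt30: "[0..<30] = [0,1,2,3,4,5,6,7,8,9,10,11,12,13,14,15,16,17,18,19,20,21,22,23,24,25,26,27,28,29]"
  by (simp add: upt_rec numeral_eq_Suc)

lemma fld_comp: "fld k x $ s = (\<Sum>i\<leftarrow>[0..<30]. k i * rmono i x * rvec i $ s)"
proof -
  have "fld k x $ s = (\<Sum>i<30. k i * rmono i x * rvec i $ s)"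
    by (simp add: fld_def len_R)
  also have "\<dots> = (\<Sum>i\<leftarrow>[0..<30]. k i * rmono i x * rvec i $ s)"
    by (simp add: sum_set_upt_conv_sum_list_nat[symmetric] atLeast_upt)
  finally show ?thesis .
qed

lemma fld_RAF: "fld k x $ RAF = - k 0 * (x$RAF * x$RAS) + k 1 * (x$RAS_RAF) + k 5 * (x$RAF_RAFPH)"
  unfolding fld_comp rmono_eq rvec_def cplx_def by (simp add: erk_reactions_def upt30 algebra_simps)

lemma fld_pRAF: "fld k x $ pRAF = k 2 * (x$RAS_RAF) - k 3 * (x$pRAF * x$RAFPH) + k 4 * (x$RAF_RAFPH) - k 6 * (x$MEK * x$pRAF) + k 7 * (x$MEK_pRAF) + k 8 * (x$MEK_pRAF) - k 9 * (x$pMEK * x$pRAF) + k 10 * (x$pMEK_pRAF) + k 11 * (x$pMEK_pRAF)"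
  unfolding fld_comp rmono_eq rvec_def cplx_def by (simp add: erk_reactions_def upt30 algebra_simps)

lemma fld_MEK: "fld k x $ MEK = - k 6 * (x$MEK * x$pRAF) + k 7 * (x$MEK_pRAF) + k 17 * (x$pMEK_PH)"
  unfolding fld_comp rmono_eq rvec_def cplx_def by (simp add: erk_reactions_def upt30 algebra_simps)

lemma fld_pMEK: "fld k x $ pMEK = k 8 * (x$MEK_pRAF) - k 9 * (x$pMEK * x$pRAF) + k 10 * (x$pMEK_pRAF) + k 14 * (x$ppMEK_PH) - k 15 * (x$pMEK * x$PH) + k 16 * (x$pMEK_PH)"
  unfolding fld_comp rmono_eq rvec_def cplx_def by (simp add: erk_reactions_def upt30 algebra_simps)

lemma fld_ppMEK: "fld k x $ ppMEK = k 11 * (x$pMEK_pRAF) - k 12 * (x$ppMEK * x$PH) + k 13 * (x$ppMEK_PH) - k 18 * (x$ERK * x$ppMEK) + k 19 * (x$ERK_ppMEK) + k 20 * (x$ERK_ppMEK) - k 21 * (x$pERK * x$ppMEK) + k 22 * (x$pERK_ppMEK) + k 23 * (x$pERK_ppMEK)"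
  unfolding fld_comp rmono_eq rvec_def cplx_def by (simp add: erk_reactions_def upt30 algebra_simps)

lemma fld_ERK: "fld k x $ ERK = - k 18 * (x$ERK * x$ppMEK) + k 19 * (x$ERK_ppMEK) + k 29 * (x$pERK_PH)"
  unfolding fld_comp rmono_eq rvec_def cplx_def by (simp add: erk_reactions_def upt30 algebra_simps)

lemma fld_pERK: "fld k x $ pERK = k 20 * (x$ERK_ppMEK) - k 21 * (x$pERK * x$ppMEK) + k 22 * (x$pERK_ppMEK) + k 26 * (x$ppERK_PH) - k 27 * (x$pERK * x$PH) + k 28 * (x$pERK_PH)"
  unfolding fld_comp rmono_eq rvec_def cplx_def by (simp add: erk_reactions_def upt30 algebra_simps)

lemma fld_ppERK: "fld k x $ ppERK = k 23 * (x$pERK_ppMEK) - k 24 * (x$ppERK * x$PH) + k 25 * (x$ppERK_PH)"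
  unfolding fld_comp rmono_eq rvec_def cplx_def by (simp add: erk_reactions_def upt30 algebra_simps)

lemma fld_RAS: "fld k x $ RAS = - k 0 * (x$RAF * x$RAS) + k 1 * (x$RAS_RAF) + k 2 * (x$RAS_RAF)"
  unfolding fld_comp rmono_eq rvec_def cplx_def by (simp add: erk_reactions_def upt30 algebra_simps)

lemma fld_RAFPH: "fld k x $ RAFPH = - k 3 * (x$pRAF * x$RAFPH) + k 4 * (x$RAF_RAFPH) + k 5 * (x$RAF_RAFPH)"
  unfolding fld_comp rmono_eq rvec_def cplx_def by (simp add: erk_reactions_def upt30 algebra_simps)

lemma fld_PH: "fld k x $ PH = - k 12 * (x$ppMEK * x$PH) + k 13 * (x$ppMEK_PH) + k 14 * (x$ppMEK_PH) - k 15 * (x$pMEK * x$PH) + k 16 * (x$pMEK_PH) + k 17 * (x$pMEK_PH) - k 24 * (x$ppERK * x$PH) + k 25 * (x$ppERK_PH) + k 26 * (x$ppERK_PH) - k 27 * (x$pERK * x$PH) + k 28 * (x$pERK_PH) + k 29 * (x$pERK_PH)"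
  unfolding fld_comp rmono_eq rvec_def cplx_def by (simp add: erk_reactions_def upt30 algebra_simps)

lemma fld_RAS_RAF: "fld k x $ RAS_RAF = k 0 * (x$RAF * x$RAS) - k 1 * (x$RAS_RAF) - k 2 * (x$RAS_RAF)"
  unfolding fld_comp rmono_eq rvec_def cplx_def by (simp add: erk_reactions_def upt30 algebra_simps)

lemma fld_MEK_pRAF: "fld k x $ MEK_pRAF = k 6 * (x$MEK * x$pRAF) - k 7 * (x$MEK_pRAF) - k 8 * (x$MEK_pRAF)"
  unfolding fld_comp rmono_eq rvec_def cplx_def by (simp add: erk_reactions_def upt30 algebra_simps)

lemma fld_pMEK_pRAF: "fld k x $ pMEK_pRAF = k 9 * (x$pMEK * x$pRAF) - k 10 * (x$pMEK_pRAF) - k 11 * (x$pMEK_pRAF)"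
  unfolding fld_comp rmono_eq rvec_def cplx_def by (simp add: erk_reactions_def upt30 algebra_simps)

lemma fld_ERK_ppMEK: "fld k x $ ERK_ppMEK = k 18 * (x$ERK * x$ppMEK) - k 19 * (x$ERK_ppMEK) - k 20 * (x$ERK_ppMEK)"
  unfolding fld_comp rmono_eq rvec_def cplx_def by (simp add: erk_reactions_def upt30 algebra_simps)

lemma fld_pERK_ppMEK: "fld k x $ pERK_ppMEK = k 21 * (x$pERK * x$ppMEK) - k 22 * (x$pERK_ppMEK) - k 23 * (x$pERK_ppMEK)"
  unfolding fld_comp rmono_eq rvec_def cplx_def by (simp add: erk_reactions_def upt30 algebra_simps)

lemma fld_RAF_RAFPH: "fld k x $ RAF_RAFPH = k 3 * (x$pRAF * x$RAFPH) - k 4 * (x$RAF_RAFPH) - k 5 * (x$RAF_RAFPH)"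
  unfolding fld_comp rmono_eq rvec_def cplx_def by (simp add: erk_reactions_def upt30 algebra_simps)

lemma fld_ppMEK_PH: "fld k x $ ppMEK_PH = k 12 * (x$ppMEK * x$PH) - k 13 * (x$ppMEK_PH) - k 14 * (x$ppMEK_PH)"
  unfolding fld_comp rmono_eq rvec_def cplx_def by (simp add: erk_reactions_def upt30 algebra_simps)

lemma fld_pMEK_PH: "fld k x $ pMEK_PH = k 15 * (x$pMEK * x$PH) - k 16 * (x$pMEK_PH) - k 17 * (x$pMEK_PH)"
  unfolding fld_comp rmono_eq rvec_def cplx_def by (simp add: erk_reactions_def upt30 algebra_simps)

lemma fld_ppERK_PH: "fld k x $ ppERK_PH = k 24 * (x$ppERK * x$PH) - k 25 * (x$ppERK_PH) - k 26 * (x$ppERK_PH)"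
  unfolding fld_comp rmono_eq rvec_def cplx_def by (simp add: erk_reactions_def upt30 algebra_simps)

lemma fld_pERK_PH: "fld k x $ pERK_PH = k 27 * (x$pERK * x$PH) - k 28 * (x$pERK_PH) - k 29 * (x$pERK_PH)"
  unfolding fld_comp rmono_eq rvec_def cplx_def by (simp add: erk_reactions_def upt30 algebra_simps)

definition qf :: "(species \<Rightarrow> species \<Rightarrow> real) \<Rightarrow> real^species \<Rightarrow> real" where
  "qf Q v = (\<Sum>a\<in>UNIV. \<Sum>b\<in>UNIV. Q a b * v$a * v$b)"

definition dqf :: "(species \<Rightarrow> species \<Rightarrow> real) \<Rightarrow> real^species \<Rightarrow> real^species \<Rightarrow> real" where
  "dqf Q v h = (\<Sum>a\<in>UNIV. \<Sum>b\<in>UNIV. Q a b * (h$a * v$b + v$a * h$b))"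

lemma vnth_deriv: "((\<lambda>x. x $ a) has_derivative (\<lambda>h. h $ a)) F"
  using bounded_linear_vec_nth by (rule bounded_linear.has_derivative[OF _ has_derivative_ident])

lemma qf_deriv: "(qf Q has_derivative dqf Q v) (at v)"
  unfolding qf_def[abs_def] dqf_def
  by (rule has_derivative_eq_rhs, (rule derivative_intros vnth_deriv)+, auto simp: algebra_simps)

lemma dqf_sym:
  assumes "\<And>a b. Q a b = Q b a"
  shows "dqf Q v h = 2 * (\<Sum>a\<in>UNIV. \<Sum>b\<in>UNIV. Q a b * v$b * h$a)"
proof -
  have "dqf Q v h = (\<Sum>a\<in>UNIV. \<Sum>b\<in>UNIV. Q a b * v$b * h$a) + (\<Sum>a\<in>UNIV. \<Sum>b\<in>UNIV. Q a b * v$a * h$b)"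
    by (simp add: dqf_def algebra_simps sum.distrib)
  also have "(\<Sum>a\<in>UNIV. \<Sum>b\<in>UNIV. Q a b * v$a * h$b) = (\<Sum>b\<in>UNIV. \<Sum>a\<in>UNIV. Q a b * v$a * h$b)"
    by (rule sum.swap)
  also have "\<dots> = (\<Sum>a\<in>UNIV. \<Sum>b\<in>UNIV. Q a b * v$b * h$a)"
    using assms by (simp add: mult.commute)
  finally show ?thesis by simp
qed

lemma qf_lower:
  assumes Q: "\<And>a b. Q a b = (\<Sum>k\<in>UNIV. R k a * R k b) + (if a = b \<and> a \<in> S then \<mu> else 0)"
    and mu: "0 \<le> \<mu>"
  shows "\<mu> * (\<Sum>a\<in>S. (v$a)^2) \<le> qf Q v"
proof -
  have "qf Q v = (\<Sum>a\<in>UNIV. \<Sum>b\<in>UNIV. (\<Sum>k\<in>UNIV. R k a * R k b) * v$a * v$b)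
        + (\<Sum>a\<in>UNIV. \<Sum>b\<in>UNIV. (if a = b \<and> a \<in> S then \<mu> else 0) * v$a * v$b)"
    by (simp add: qf_def Q algebra_simps sum.distrib)
  also have "(\<Sum>a\<in>UNIV. \<Sum>b\<in>UNIV. (\<Sum>k\<in>UNIV. R k a * R k b) * v$a * v$b)
      = (\<Sum>k\<in>UNIV. (\<Sum>a\<in>UNIV. R k a * v$a)^2)"
  proof -
    have "(\<Sum>a\<in>UNIV. \<Sum>b\<in>UNIV. (\<Sum>k\<in>UNIV. R k a * R k b) * v$a * v$b)
        = (\<Sum>a\<in>UNIV. \<Sum>b\<in>UNIV. \<Sum>k\<in>UNIV. (R k a * v$a) * (R k b * v$b))"
      unfolding sum_distrib_right by (simp add: mult_ac)
    also have "\<dots> = (\<Sum>a\<in>UNIV. \<Sum>k\<in>UNIV. \<Sum>b\<in>UNIV. (R k a * v$a) * (R k b * v$b))"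
      by (rule sum.cong[OF refl], rule sum.swap)
    also have "\<dots> = (\<Sum>k\<in>UNIV. \<Sum>a\<in>UNIV. \<Sum>b\<in>UNIV. (R k a * v$a) * (R k b * v$b))"
      by (rule sum.swap)
    also have "\<dots> = (\<Sum>k\<in>UNIV. (\<Sum>a\<in>UNIV. R k a * v$a)^2)"
      by (simp add: power2_eq_square sum_product)
    finally show ?thesis .
  qed
  also have "(\<Sum>a\<in>UNIV. \<Sum>b\<in>UNIV. (if a = b \<and> a \<in> S then \<mu> else 0) * v$a * v$b) = \<mu> * (\<Sum>a\<in>S. (v$a)^2)"
  proof -
    have "(\<Sum>a\<in>UNIV. \<Sum>b\<in>UNIV. (if a = b \<and> a \<in> S then \<mu> else 0) * v$a * v$b)
        = (\<Sum>a\<in>UNIV. (if a \<in> S then \<mu> * (v$a)^2 else 0))"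
    proof (rule sum.cong[OF refl])
      fix a
      have "(\<Sum>b\<in>UNIV. (if a = b \<and> a \<in> S then \<mu> else 0) * v$a * v$b)
          = (\<Sum>b\<in>UNIV. if b = a then (if a \<in> S then \<mu> * (v$a)^2 else 0) else 0)"
        by (rule sum.cong) (auto simp: power2_eq_square)
      also have "\<dots> = (if a \<in> S then \<mu> * (v$a)^2 else 0)" by (simp add: sum.delta')
      finally show "(\<Sum>b\<in>UNIV. (if a = b \<and> a \<in> S then \<mu> else 0) * v$a * v$b)
          = (if a \<in> S then \<mu> * (v$a)^2 else 0)" .
    qed
    also have "\<dots> = \<mu> * (\<Sum>a\<in>S. (v$a)^2)"
      by (simp add: sum.If_cases sum_distrib_left)
    finally show ?thesis .
  qed
  finally show ?thesis by (simp add: sum_nonneg)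
qed

lemma card_species: "card (UNIV :: species set) = 21"
  by (simp add: UNIV_species)

lemma qf_upper:
  fixes Q :: "species \<Rightarrow> species \<Rightarrow> real"
  assumes "\<And>a b. \<bar>Q a b\<bar> \<le> qm"
  shows "qf Q v \<le> 441 * qm * (norm v)^2"
proof -
  have "qf Q v \<le> (\<Sum>a\<in>(UNIV::species set). \<Sum>b\<in>(UNIV::species set). qm * (norm v)^2)"
    unfolding qf_def
  proof (intro sum_mono)
    fix a b
    have "Q a b * v$a * v$b \<le> \<bar>Q a b\<bar> * (\<bar>v$a\<bar> * \<bar>v$b\<bar>)"
      by (simp add: abs_mult mult.assoc[symmetric] abs_le_iff)
        (metis abs_ge_self abs_mult mult.assoc)
    also have "\<dots> \<le> qm * ((norm v) * (norm v))"
      by (intro mult_mono assms abs_ge_zero component_le_norm_cart mult_nonneg_nonneg norm_ge_zero)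
        (use assms[of a b] in auto)
    finally show "Q a b * v$a * v$b \<le> qm * (norm v)^2" by (simp add: power2_eq_square)
  qed
  also have "\<dots> = 441 * qm * (norm v)^2" by (simp add: card_species)
  finally show ?thesis .
qed

lemma rem_bound:
  fixes Q :: "species \<Rightarrow> species \<Rightarrow> real" and g :: "species \<Rightarrow> real"
  assumes "\<And>a b. \<bar>Q a b\<bar> \<le> qm" "\<And>a. \<bar>g a\<bar> \<le> G"
  shows "\<bar>\<Sum>a\<in>UNIV. \<Sum>b\<in>UNIV. Q a b * v$b * g a\<bar> \<le> 441 * qm * norm v * G"
proof -
  have "\<bar>\<Sum>a\<in>UNIV. \<Sum>b\<in>UNIV. Q a b * v$b * g a\<bar> \<le> (\<Sum>a\<in>(UNIV::species set). \<Sum>b\<in>(UNIV::species set). \<bar>Q a b * v$b * g a\<bar>)"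
    by (rule order_trans[OF sum_abs], rule sum_mono, rule sum_abs)
  also have "\<dots> \<le> (\<Sum>a\<in>(UNIV::species set). \<Sum>b\<in>(UNIV::species set). qm * norm v * G)"
  proof (intro sum_mono)
    fix a b
    show "\<bar>Q a b * v$b * g a\<bar> \<le> qm * norm v * G"
      unfolding abs_mult
      by (intro mult_mono assms component_le_norm_cart mult_nonneg_nonneg abs_ge_zero norm_ge_zero)
        (use assms(1)[of a b] in auto)
  qed
  also have "\<dots> = 441 * qm * norm v * G" by (simp add: card_species)
  finally show ?thesis .
qed

lemma sq_bound: "\<bar>x * y\<bar> \<le> (x^2 + y^2) / (2::real)"
proof -
  have "0 \<le> (\<bar>x\<bar> - \<bar>y\<bar>)^2" by simp
  then have "2 * (\<bar>x\<bar> * \<bar>y\<bar>) \<le> \<bar>x\<bar>^2 + \<bar>y\<bar>^2" by (simp add: power2_diff)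
  then show ?thesis by (simp add: abs_mult)
qed

lemma dom_bound:
  fixes N :: "species \<Rightarrow> species \<Rightarrow> real"
  shows "(\<Sum>b\<in>UNIV. \<Sum>c\<in>UNIV. N b c * v$b * v$c)
     \<le> (\<Sum>b\<in>UNIV. (N b b + (\<Sum>c\<in>UNIV-{b}. \<bar>N b c + N c b\<bar> / 2)) * (v$b)^2)"
proof -
  define M where "M b c = (N b c + N c b) / 2" for b c
  have Msym: "M b c = M c b" for b c by (simp add: M_def add.commute)
  have "(\<Sum>b\<in>UNIV. \<Sum>c\<in>UNIV. N b c * v$b * v$c)
      = (\<Sum>b\<in>UNIV. \<Sum>c\<in>UNIV. N c b * v$b * v$c)"
    by (subst sum.swap) (simp add: mult_ac)
  moreover have "(\<Sum>b\<in>UNIV. \<Sum>c\<in>UNIV. M b c * v$b * v$c)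
     = ((\<Sum>b\<in>UNIV. \<Sum>c\<in>UNIV. N b c * v$b * v$c) + (\<Sum>b\<in>UNIV. \<Sum>c\<in>UNIV. N c b * v$b * v$c)) / 2"
  proof -
    have "(\<Sum>b\<in>UNIV. \<Sum>c\<in>UNIV. M b c * v$b * v$c) = (\<Sum>b\<in>UNIV. \<Sum>c\<in>UNIV. (N b c * v$b * v$c + N c b * v$b * v$c) / 2)"
      by (intro sum.cong refl) (simp add: M_def field_simps)
    also have "\<dots> = ((\<Sum>b\<in>UNIV. \<Sum>c\<in>UNIV. N b c * v$b * v$c) + (\<Sum>b\<in>UNIV. \<Sum>c\<in>UNIV. N c b * v$b * v$c)) / 2"
      by (simp only: sum_divide_distrib[symmetric] sum.distrib)
    finally show ?thesis .
  qed
  ultimately have eq: "(\<Sum>b\<in>UNIV. \<Sum>c\<in>UNIV. N b c * v$b * v$c) = (\<Sum>b\<in>UNIV. \<Sum>c\<in>UNIV. M b c * v$b * v$c)"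
    by simp
  have split: "(\<Sum>c\<in>UNIV. M b c * v$b * v$c) = M b b * (v$b)^2 + (\<Sum>c\<in>UNIV-{b}. M b c * v$b * v$c)" for b
    by (simp add: sum.remove[of UNIV b] power2_eq_square)
  have off: "(\<Sum>b\<in>UNIV. \<Sum>c\<in>UNIV-{b}. M b c * v$b * v$c)
      \<le> (\<Sum>b\<in>UNIV. \<Sum>c\<in>UNIV-{b}. \<bar>M b c\<bar> * ((v$b)^2 + (v$c)^2) / 2)"
  proof (intro sum_mono)
    fix b c
    have "M b c * v$b * v$c \<le> \<bar>M b c\<bar> * \<bar>v$b * v$c\<bar>"
      by (metis abs_ge_self abs_mult mult.assoc)
    also have "\<bar>v$b * v$c\<bar> \<le> ((v$b)^2 + (v$c)^2) / 2"
      by (rule sq_bound)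
    then have "\<bar>M b c\<bar> * \<bar>v$b * v$c\<bar> \<le> \<bar>M b c\<bar> * (((v$b)^2 + (v$c)^2) / 2)"
      by (intro mult_left_mono) auto
    finally show "M b c * v$b * v$c \<le> \<bar>M b c\<bar> * ((v$b)^2 + (v$c)^2) / 2" by simp
  qed
  have swap2: "(\<Sum>b\<in>UNIV. \<Sum>c\<in>UNIV-{b}. \<bar>M b c\<bar> * (v$c)^2)
      = (\<Sum>b\<in>UNIV. \<Sum>c\<in>UNIV-{b}. \<bar>M b c\<bar> * (v$b)^2)"
  proof -
    have "(\<Sum>b\<in>UNIV. \<Sum>c\<in>UNIV-{b}. \<bar>M b c\<bar> * (v$c)^2)
        = (\<Sum>b\<in>UNIV. \<Sum>c\<in>UNIV. if c = b then 0 else \<bar>M b c\<bar> * (v$c)^2)"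
      by (simp add: sum.If_cases Diff_eq)
    also have "\<dots> = (\<Sum>c\<in>UNIV. \<Sum>b\<in>UNIV. if c = b then 0 else \<bar>M b c\<bar> * (v$c)^2)"
      by (rule sum.swap)
    also have "\<dots> = (\<Sum>b\<in>UNIV. \<Sum>c\<in>UNIV. if c = b then 0 else \<bar>M b c\<bar> * (v$b)^2)"
      by (rule sum.cong[OF refl], rule sum.cong[OF refl]) (auto simp: Msym)
    also have "\<dots> = (\<Sum>b\<in>UNIV. \<Sum>c\<in>UNIV-{b}. \<bar>M b c\<bar> * (v$b)^2)"
      by (simp add: sum.If_cases Diff_eq)
    finally show ?thesis .
  qed
  have "(\<Sum>b\<in>UNIV. \<Sum>c\<in>UNIV-{b}. \<bar>M b c\<bar> * ((v$b)^2 + (v$c)^2) / 2)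
      = (\<Sum>b\<in>UNIV. \<Sum>c\<in>UNIV-{b}. \<bar>M b c\<bar> * (v$b)^2)"
    using swap2 by (simp add: algebra_simps sum.distrib sum_divide_distrib[symmetric] add_divide_distrib)
  then have "(\<Sum>b\<in>UNIV. \<Sum>c\<in>UNIV. M b c * v$b * v$c)
      \<le> (\<Sum>b\<in>UNIV. M b b * (v$b)^2 + (\<Sum>c\<in>UNIV-{b}. \<bar>M b c\<bar> * (v$b)^2))"
    using off by (simp add: split sum.distrib)
  also have "\<dots> = (\<Sum>b\<in>UNIV. (N b b + (\<Sum>c\<in>UNIV-{b}. \<bar>N b c + N c b\<bar> / 2)) * (v$b)^2)"
    by (simp add: M_def algebra_simps sum_distrib_left sum_divide_distrib)
  finally show ?thesis using eq by simp
qed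

definition REDs :: "species set" where
  "REDs = {pRAF, pMEK, ppMEK, pERK, ppERK, RAS_RAF, MEK_pRAF, pMEK_pRAF, ERK_ppMEK, pERK_ppMEK,
     RAF_RAFPH, ppMEK_PH, pMEK_PH, ppERK_PH, pERK_PH}"

definition Kset :: "(real^species) set" where
  "Kset = {v. v$RAS = - v$RAS_RAF \<and> v$RAFPH = - v$RAF_RAFPH \<and>
     v$RAF = -(v$pRAF + v$RAS_RAF + v$RAF_RAFPH + v$MEK_pRAF + v$pMEK_pRAF) \<and>
     v$MEK = -(v$pMEK + v$ppMEK + v$MEK_pRAF + v$pMEK_pRAF + v$ppMEK_PH + v$pMEK_PH + v$ERK_ppMEK + v$pERK_ppMEK) \<and>
     v$ERK = -(v$pERK + v$ppERK + v$ERK_ppMEK + v$pERK_ppMEK + v$ppERK_PH + v$pERK_PH) \<and>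
     v$PH = -(v$ppMEK_PH + v$pMEK_PH + v$ppERK_PH + v$pERK_PH)}"

definition wv :: "species list \<Rightarrow> real^species" where
  "wv L = (\<chi> s. if s \<in> set L then 1 else 0)"

lemma wv_inner: "wv L \<bullet> v = (\<Sum>s\<in>set L. v$s)"
proof -
  have "wv L \<bullet> v = (\<Sum>s\<in>UNIV. if s \<in> set L then v$s else 0)"
    by (simp add: wv_def inner_vec_def) (rule sum.cong, auto)
  also have "\<dots> = (\<Sum>s\<in>set L. v$s)" by (simp add: sum.If_cases Int_absorb1)
  finally show ?thesis .
qed

definition laws :: "species list list" where
  "laws = [[RAS, RAS_RAF], [RAFPH, RAF_RAFPH], [RAF, pRAF, RAS_RAF, RAF_RAFPH, MEK_pRAF, pMEK_pRAF],
     [MEK, pMEK, ppMEK, MEK_pRAF, pMEK_pRAF, ppMEK_PH, pMEK_PH, ERK_ppMEK, pERK_ppMEK],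
     [ERK, pERK, ppERK, ERK_ppMEK, pERK_ppMEK, ppERK_PH, pERK_PH],
     [PH, ppMEK_PH, pMEK_PH, ppERK_PH, pERK_PH]]"

lemma upt30': "i < 30 \<longleftrightarrow> i \<in> set [0..<30]" by simp

lemma laws_rvec: "L \<in> set laws \<Longrightarrow> i < 30 \<Longrightarrow> wv L \<bullet> rvec i = 0"
  unfolding upt30' upt30 wv_inner rvec_def cplx_def
  by (auto simp: laws_def erk_reactions_def)

lemma Kset_iff: "v \<in> Kset \<longleftrightarrow> (\<forall>L\<in>set laws. wv L \<bullet> v = 0)"
  by (simp add: Kset_def laws_def wv_inner) (auto simp: algebra_simps)

lemma inv_K:
  assumes "z \<in> compat_class xs" "is_solution k phi z" "0 \<le> t"
  shows "phi t - xs \<in> Kset"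
  unfolding Kset_iff
proof
  fix L assume L: "L \<in> set laws"
  have "wv L \<bullet> (z - xs) = 0"
    using assms(1) laws_rvec[OF L] conserv_stoich by (auto simp: compat_class_def)
  moreover have "wv L \<bullet> phi t = wv L \<bullet> z"
    using conserv_sol[OF laws_rvec[OF L] assms(2,3)] .
  ultimately show "wv L \<bullet> (phi t - xs) = 0" by (simp add: inner_diff_right)
qed

definition qmn :: "species list \<Rightarrow> real^species \<Rightarrow> real" where
  "qmn l v = (case l of [a, b] \<Rightarrow> v$a * v$b | _ \<Rightarrow> 0)"

definition quadf :: "(nat \<Rightarrow> real) \<Rightarrow> real^species \<Rightarrow> real^species" where
  "quadf k v = (\<Sum>i<30. (k i * qmn (fst (erk_reactions ! i)) v) *\<^sub>R rvec i)"

lemma qmn_bound: "\<bar>qmn l v\<bar> \<le> (norm v)^2"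
proof -
  have "\<bar>v$a * v$b\<bar> \<le> (norm v)^2" for a b
    unfolding abs_mult power2_eq_square
    by (intro mult_mono component_le_norm_cart) auto
  then show ?thesis unfolding qmn_def
    by (cases l rule: remdups_adj.cases) (auto split: list.splits)
qed

lemma rvec_bound: "i < 30 \<Longrightarrow> \<bar>rvec i $ a\<bar> \<le> 1"
  unfolding upt30' upt30 rvec_def cplx_def
  by (cases a) (auto simp: erk_reactions_def)

lemma quadf_bound:
  assumes "\<And>i. i < 30 \<Longrightarrow> 0 \<le> k i"
  shows "\<bar>quadf k v $ a\<bar> \<le> (\<Sum>i<30. k i) * (norm v)^2"
proof -
  have "\<bar>quadf k v $ a\<bar> = \<bar>\<Sum>i<30. k i * qmn (fst (erk_reactions ! i)) v * rvec i $ a\<bar>"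
    by (simp add: quadf_def)
  also have "\<dots> \<le> (\<Sum>i<30. \<bar>k i * qmn (fst (erk_reactions ! i)) v * rvec i $ a\<bar>)"
    by (rule sum_abs)
  also have "\<dots> \<le> (\<Sum>i<30. k i * (norm v)^2)"
  proof (rule sum_mono)
    fix i assume "i \<in> {..<(30::nat)}"
    then have i: "i < 30" by simp
    show "\<bar>k i * qmn (fst (erk_reactions ! i)) v * rvec i $ a\<bar> \<le> k i * (norm v)^2"
      unfolding abs_mult using assms[OF i] qmn_bound rvec_bound[OF i]
      by (simp add: mult_left_mono mult_le_one order_trans[OF mult_right_le_one_le])
  qed
  also have "\<dots> = (\<Sum>i<30. k i) * (norm v)^2" by (simp add: sum_distrib_right)
  finally show ?thesis .
qed

lemma list_bound: "(\<forall>y\<in>set ys. \<bar>y\<bar> \<le> s) \<Longrightarrow> \<bar>sum_list ys\<bar> \<le> real (length ys) * (s::real)"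
proof (induction ys)
  case Nil then show ?case by simp
next
  case (Cons y ys)
  then have "\<bar>y + sum_list ys\<bar> \<le> s + real (length ys) * s"
    by (smt (verit) list.set_intros)
  then show ?case by (simp add: algebra_simps)
qed

lemma K_norm:
  assumes "v \<in> Kset"
  shows "(norm v)^2 \<le> 144 * (\<Sum>a\<in>REDs. (v$a)^2)"
proof -
  define S where "S = (\<Sum>a\<in>REDs. (v$a)^2)"
  have Snn: "0 \<le> S" by (simp add: S_def sum_nonneg)
  have cmp: "\<bar>v$a\<bar> \<le> sqrt S" if "a \<in> REDs" for a
  proof -
    have "(v$a)^2 \<le> S" unfolding S_def
      by (rule member_le_sum[OF that]) (auto simp: REDs_def)
    then show ?thesis by (simp add: real_le_rsqrt)
  qed
  have sq: "x^2 \<le> n^2 * S" if "\<bar>x\<bar> \<le> n * sqrt S" "0 \<le> n" for x n :: real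
  proof -
    have "x^2 = \<bar>x\<bar>^2" by simp
    also have "\<dots> \<le> (n * sqrt S)^2" by (rule power_mono[OF that(1)]) simp
    also have "\<dots> = n^2 * S" using Snn by (simp add: power_mult_distrib)
    finally show ?thesis .
  qed
  note c = cmp[unfolded REDs_def, simplified]
  have e_RAS: "(v$RAS)^2 \<le> 1^2 * S"
  proof (rule sq)
    have "v$RAS = - sum_list [v$RAS_RAF]" using assms by (simp add: Kset_def)
    moreover have "\<bar>sum_list [v$RAS_RAF]\<bar> \<le> real (length [v$RAS_RAF]) * sqrt S"
      by (rule list_bound) (use c in auto)
    ultimately show "\<bar>v$RAS\<bar> \<le> 1 * sqrt S" by simp
  qed simp
  have e_RAFPH: "(v$RAFPH)^2 \<le> 1^2 * S"
  proof (rule sq)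
    have "v$RAFPH = - sum_list [v$RAF_RAFPH]" using assms by (simp add: Kset_def)
    moreover have "\<bar>sum_list [v$RAF_RAFPH]\<bar> \<le> real (length [v$RAF_RAFPH]) * sqrt S"
      by (rule list_bound) (use c in auto)
    ultimately show "\<bar>v$RAFPH\<bar> \<le> 1 * sqrt S" by simp
  qed simp
  have e_RAF: "(v$RAF)^2 \<le> 5^2 * S"
  proof (rule sq)
    have "v$RAF = - sum_list [v$pRAF, v$RAS_RAF, v$RAF_RAFPH, v$MEK_pRAF, v$pMEK_pRAF]" using assms by (simp add: Kset_def)
    moreover have "\<bar>sum_list [v$pRAF, v$RAS_RAF, v$RAF_RAFPH, v$MEK_pRAF, v$pMEK_pRAF]\<bar> \<le> real (length [v$pRAF, v$RAS_RAF, v$RAF_RAFPH, v$MEK_pRAF, v$pMEK_pRAF]) * sqrt S"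
      by (rule list_bound) (use c in auto)
    ultimately show "\<bar>v$RAF\<bar> \<le> 5 * sqrt S" by simp
  qed simp
  have e_MEK: "(v$MEK)^2 \<le> 8^2 * S"
  proof (rule sq)
    have "v$MEK = - sum_list [v$pMEK, v$ppMEK, v$MEK_pRAF, v$pMEK_pRAF, v$ppMEK_PH, v$pMEK_PH, v$ERK_ppMEK, v$pERK_ppMEK]" using assms by (simp add: Kset_def)
    moreover have "\<bar>sum_list [v$pMEK, v$ppMEK, v$MEK_pRAF, v$pMEK_pRAF, v$ppMEK_PH, v$pMEK_PH, v$ERK_ppMEK, v$pERK_ppMEK]\<bar> \<le> real (length [v$pMEK, v$ppMEK, v$MEK_pRAF, v$pMEK_pRAF, v$ppMEK_PH, v$pMEK_PH, v$ERK_ppMEK, v$pERK_ppMEK]) * sqrt S"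
      by (rule list_bound) (use c in auto)
    ultimately show "\<bar>v$MEK\<bar> \<le> 8 * sqrt S" by simp
  qed simp
  have e_ERK: "(v$ERK)^2 \<le> 6^2 * S"
  proof (rule sq)
    have "v$ERK = - sum_list [v$pERK, v$ppERK, v$ERK_ppMEK, v$pERK_ppMEK, v$ppERK_PH, v$pERK_PH]" using assms by (simp add: Kset_def)
    moreover have "\<bar>sum_list [v$pERK, v$ppERK, v$ERK_ppMEK, v$pERK_ppMEK, v$ppERK_PH, v$pERK_PH]\<bar> \<le> real (length [v$pERK, v$ppERK, v$ERK_ppMEK, v$pERK_ppMEK, v$ppERK_PH, v$pERK_PH]) * sqrt S"
      by (rule list_bound) (use c in auto)
    ultimately show "\<bar>v$ERK\<bar> \<le> 6 * sqrt S" by simp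
  qed simp
  have e_PH: "(v$PH)^2 \<le> 4^2 * S"
  proof (rule sq)
    have "v$PH = - sum_list [v$ppMEK_PH, v$pMEK_PH, v$ppERK_PH, v$pERK_PH]" using assms by (simp add: Kset_def)
    moreover have "\<bar>sum_list [v$ppMEK_PH, v$pMEK_PH, v$ppERK_PH, v$pERK_PH]\<bar> \<le> real (length [v$ppMEK_PH, v$pMEK_PH, v$ppERK_PH, v$pERK_PH]) * sqrt S"
      by (rule list_bound) (use c in auto)
    ultimately show "\<bar>v$PH\<bar> \<le> 4 * sqrt S" by simp
  qed simp
  have "(norm v)^2 = (\<Sum>s\<in>UNIV. (v$s)^2)"
    unfolding power2_norm_eq_inner inner_vec_def by (simp add: power2_eq_square)
  also have "\<dots> = S + (v$RAS)^2 + (v$RAFPH)^2 + (v$RAF)^2 + (v$MEK)^2 + (v$ERK)^2 + (v$PH)^2"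
    by (simp add: S_def UNIV_species REDs_def)
  finally show ?thesis using e_RAS e_RAFPH e_RAF e_MEK e_ERK e_PH unfolding S_def[symmetric] by simp
qed

theorem cert_stable:
  fixes Q R Ai Nt :: "species \<Rightarrow> species \<Rightarrow> real" and kk :: "nat \<Rightarrow> real" and xs :: "real^species"
  assumes kpos: "\<And>i. i < 30 \<Longrightarrow> 0 \<le> kk i"
  and lin: "\<And>a v. a \<in> REDs \<Longrightarrow> v \<in> Kset \<Longrightarrow> fld kk (xs + v) $ a = (\<Sum>c\<in>UNIV. Ai a c * v$c) / D + quadf kk v $ a"
  and Dpos: "0 < D"
  and Qdef: "\<And>a b. Q a b = (\<Sum>k\<in>UNIV. R k a * R k b) + (if a = b \<and> a \<in> REDs then mu else 0)"
  and Rsupp: "\<And>k a. a \<notin> REDs \<Longrightarrow> R k a = 0"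
  and mupos: "0 < mu"
  and qmb: "\<And>a b. \<bar>Q a b\<bar> \<le> qm"
  and Nt: "\<And>b c. 2 * (\<Sum>a\<in>UNIV. Q a b * Ai a c) = Nt b c"
  and dom: "\<And>b. Nt b b + (\<Sum>c\<in>UNIV-{b}. \<bar>Nt b c + Nt c b\<bar> / 2) \<le> (if b \<in> REDs then -1 else 0)"
  shows "asympt_stable kk xs"
proof -
  have Qsym: "Q a b = Q b a" for a b
  proof -
    have "(a = b \<and> a \<in> REDs) = (b = a \<and> b \<in> REDs)" by auto
    then show ?thesis unfolding Qdef by (simp only: mult.commute)
  qed
  have Q0: "Q a b = 0" if "a \<notin> REDs" for a b using that by (simp add: Qdef Rsupp)
  have qmpos: "0 < qm"
  proof -
    have "pRAF \<in> REDs" by (simp add: REDs_def)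
    then have "mu \<le> Q pRAF pRAF" by (simp add: Qdef sum_nonneg)
    then show ?thesis using qmb[of pRAF pRAF] mupos by simp
  qed
  define \<kappa> where "\<kappa> = (\<Sum>i<30. kk i) + 1"
  have kappa: "0 < \<kappa>" "(\<Sum>i<30. kk i) \<le> \<kappa>"
    using kpos by (auto simp: \<kappa>_def intro!: sum_nonneg add_nonneg_pos)
  have qb: "\<bar>quadf kk v $ a\<bar> \<le> \<kappa> * (norm v)^2" for v a
    using quadf_bound[of kk v a] kpos kappa(2) by (smt (verit) mult_right_mono zero_le_power2)
  define c0 where "c0 = 1 / (288 * D)"
  have c0pos: "0 < c0" using Dpos by (simp add: c0_def)
  define C2 where "C2 = 882 * qm * \<kappa>"
  have C2pos: "0 < C2" using qmpos kappa by (simp add: C2_def)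
  define r where "r = c0 / C2"
  have rpos: "0 < r" using c0pos C2pos by (simp add: r_def)
  show ?thesis
  proof (rule lyap_stable[where Vf = "qf Q" and DV = "dqf Q" and Kset = Kset and m = "mu / 144"
        and M = "441 * qm" and c = c0 and r = r])
    show "(qf Q has_derivative dqf Q v) (at v)" for v by (rule qf_deriv)
    show "phi t - xs \<in> Kset" if "z \<in> compat_class xs" "is_solution kk phi z" "0 \<le> t" for z phi t
      using inv_K[OF that] .
    show "0 < mu / 144" "0 < 441 * qm" "0 < c0" "0 < r" using mupos qmpos c0pos rpos by auto
    show "mu / 144 * (norm v)^2 \<le> qf Q v" if "v \<in> Kset" for v
    proof -
      have "mu / 144 * (norm v)^2 \<le> mu / 144 * (144 * (\<Sum>a\<in>REDs. (v$a)^2))"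
        using K_norm[OF that] mupos by (intro mult_left_mono) auto
      also have "\<dots> = mu * (\<Sum>a\<in>REDs. (v$a)^2)" by simp
      also have "\<dots> \<le> qf Q v" by (rule qf_lower[OF Qdef]) (use mupos in simp)
      finally show ?thesis .
    qed
    show "qf Q v \<le> 441 * qm * (norm v)^2" for v by (rule qf_upper[OF qmb])
    show "dqf Q v (fld kk (xs + v)) \<le> - c0 * (norm v)^2" if K: "v \<in> Kset" and nr: "norm v < r" for v
    proof -
      define f where "f = fld kk (xs + v)"
      define g where "g a = (\<Sum>c\<in>UNIV. Ai a c * v$c) / D + quadf kk v $ a" for a
      have "dqf Q v f = 2 * (\<Sum>a\<in>UNIV. \<Sum>b\<in>UNIV. Q a b * v$b * f$a)"
        by (rule dqf_sym[OF Qsym])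
      also have "(\<Sum>a\<in>UNIV. \<Sum>b\<in>UNIV. Q a b * v$b * f$a) = (\<Sum>a\<in>UNIV. \<Sum>b\<in>UNIV. Q a b * v$b * g a)"
      proof (intro sum.cong refl)
        fix a b
        show "Q a b * v$b * f$a = Q a b * v$b * g a"
        proof (cases "a \<in> REDs")
          case True then show ?thesis using lin[OF True K] by (simp add: f_def g_def)
        next
          case False then show ?thesis by (simp add: Q0)
        qed
      qed
      also have "\<dots> = (\<Sum>a\<in>UNIV. \<Sum>b\<in>UNIV. (Q a b * v$b * (\<Sum>c\<in>UNIV. Ai a c * v$c)) / D
                     + Q a b * v$b * quadf kk v $ a)"
        by (intro sum.cong refl) (simp add: g_def ring_distribs)
      also have "\<dots> = (\<Sum>a\<in>UNIV. \<Sum>b\<in>UNIV. Q a b * v$b * (\<Sum>c\<in>UNIV. Ai a c * v$c)) / D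
                     + (\<Sum>a\<in>UNIV. \<Sum>b\<in>UNIV. Q a b * v$b * quadf kk v $ a)"
        by (simp only: sum.distrib sum_divide_distrib)
      finally have eq: "dqf Q v f = 2 / D * (\<Sum>a\<in>UNIV. \<Sum>b\<in>UNIV. Q a b * v$b * (\<Sum>c\<in>UNIV. Ai a c * v$c))
             + 2 * (\<Sum>a\<in>UNIV. \<Sum>b\<in>UNIV. Q a b * v$b * quadf kk v $ a)"
        by (simp add: algebra_simps)
      have T1eq: "(\<Sum>a\<in>UNIV. \<Sum>b\<in>UNIV. Q a b * v$b * (\<Sum>c\<in>UNIV. Ai a c * v$c))
            = (\<Sum>b\<in>UNIV. \<Sum>c\<in>UNIV. (Nt b c / 2) * v$b * v$c)"
      proof -
        have "(\<Sum>a\<in>UNIV. \<Sum>b\<in>UNIV. Q a b * v$b * (\<Sum>c\<in>UNIV. Ai a c * v$c))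
            = (\<Sum>a\<in>UNIV. \<Sum>b\<in>UNIV. \<Sum>c\<in>UNIV. Q a b * Ai a c * v$b * v$c)"
          by (simp add: sum_distrib_left mult_ac)
        also have "\<dots> = (\<Sum>b\<in>UNIV. \<Sum>a\<in>UNIV. \<Sum>c\<in>UNIV. Q a b * Ai a c * v$b * v$c)"
          by (rule sum.swap)
        also have "\<dots> = (\<Sum>b\<in>UNIV. \<Sum>c\<in>UNIV. \<Sum>a\<in>UNIV. Q a b * Ai a c * v$b * v$c)"
          by (rule sum.cong[OF refl], rule sum.swap)
        also have "\<dots> = (\<Sum>b\<in>UNIV. \<Sum>c\<in>UNIV. (\<Sum>a\<in>UNIV. Q a b * Ai a c) * v$b * v$c)"
          by (simp add: sum_distrib_right)
        also have "\<dots> = (\<Sum>b\<in>UNIV. \<Sum>c\<in>UNIV. (Nt b c / 2) * v$b * v$c)"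
          by (simp add: Nt[symmetric])
        finally show ?thesis .
      qed
      define SR where "SR = (\<Sum>a\<in>REDs. (v$a)^2)"
      have T1: "(\<Sum>b\<in>UNIV. \<Sum>c\<in>UNIV. (Nt b c / 2) * v$b * v$c) \<le> - SR / 2"
      proof -
        have "(\<Sum>b\<in>UNIV. \<Sum>c\<in>UNIV. (Nt b c / 2) * v$b * v$c)
            \<le> (\<Sum>b\<in>UNIV. (Nt b b / 2 + (\<Sum>c\<in>UNIV-{b}. \<bar>Nt b c / 2 + Nt c b / 2\<bar> / 2)) * (v$b)^2)"
          by (rule dom_bound)
        also have "\<dots> = (\<Sum>b\<in>UNIV. (Nt b b + (\<Sum>c\<in>UNIV-{b}. \<bar>Nt b c + Nt c b\<bar> / 2)) * (v$b)^2 / 2)"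
        proof (intro sum.cong refl)
          fix b
          have "(\<Sum>c\<in>UNIV-{b}. \<bar>Nt b c / 2 + Nt c b / 2\<bar> / 2) = (\<Sum>c\<in>UNIV-{b}. \<bar>Nt b c + Nt c b\<bar> / 2) / 2"
            unfolding sum_divide_distrib by (intro sum.cong refl) (simp add: add_divide_distrib[symmetric] abs_divide)
          then show "(Nt b b / 2 + (\<Sum>c\<in>UNIV-{b}. \<bar>Nt b c / 2 + Nt c b / 2\<bar> / 2)) * (v$b)^2
              = (Nt b b + (\<Sum>c\<in>UNIV-{b}. \<bar>Nt b c + Nt c b\<bar> / 2)) * (v$b)^2 / 2"
            by (simp add: field_simps)
        qed
        also have "\<dots> = (\<Sum>b\<in>UNIV. (Nt b b + (\<Sum>c\<in>UNIV-{b}. \<bar>Nt b c + Nt c b\<bar> / 2)) * (v$b)^2) / 2"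
          by (simp only: sum_divide_distrib)
        also have "\<dots> \<le> (\<Sum>b\<in>UNIV. (if b \<in> REDs then -1 else 0) * (v$b)^2) / 2"
          by (intro divide_right_mono sum_mono mult_right_mono dom) auto
        also have "(\<Sum>b\<in>UNIV. (if b \<in> REDs then -1 else 0) * (v$b)^2) = - SR"
        proof -
          have "(\<Sum>b\<in>UNIV. (if b \<in> REDs then -1 else 0) * (v$b)^2) = (\<Sum>b\<in>UNIV. if b \<in> REDs then - ((v$b)^2) else 0)"
            by (intro sum.cong) auto
          also have "\<dots> = - SR" by (simp add: sum.If_cases SR_def sum_negf)
          finally show ?thesis .
        qed
        finally show ?thesis by simp
      qed
      have T2: "\<bar>\<Sum>a\<in>UNIV. \<Sum>b\<in>UNIV. Q a b * v$b * quadf kk v $ a\<bar> \<le> 441 * qm * norm v * (\<kappa> * (norm v)^2)"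
        by (rule rem_bound[OF qmb qb])
      have SRn: "(norm v)^2 \<le> 144 * SR" using K_norm[OF K] by (simp add: SR_def)
      have n0: "0 \<le> norm v" by simp
      have "dqf Q v f \<le> 2 / D * (- SR / 2) + 2 * (441 * qm * norm v * (\<kappa> * (norm v)^2))"
        unfolding eq T1eq
        using T1 T2 Dpos by (intro add_mono mult_left_mono) auto
      also have "\<dots> = - SR / D + C2 * norm v * (norm v)^2" by (simp add: C2_def algebra_simps)
      also have "- SR / D \<le> - ((norm v)^2) / (144 * D)"
        using SRn Dpos by (simp add: field_simps)
      also have "C2 * norm v * (norm v)^2 \<le> C2 * r * (norm v)^2"
        using nr C2pos by (intro mult_right_mono mult_left_mono) auto
      also have "C2 * r = c0" using C2pos by (simp add: r_def)
      finally have "dqf Q v f \<le> - ((norm v)^2) / (144 * D) + c0 * (norm v)^2" by simp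
      also have "\<dots> = - c0 * (norm v)^2" by (simp add: c0_def field_simps)
      finally show ?thesis by (simp add: f_def)
    qed
  qed
qed

lemma sum_UNIV_species: "(\<Sum>s\<in>(UNIV::species set). f s) = f RAF + f pRAF + f MEK + f pMEK + f ppMEK + f ERK + f pERK + f ppERK + f RAS + f RAFPH + f PH + f RAS_RAF + f MEK_pRAF + f pMEK_pRAF + f ERK_ppMEK + f pERK_ppMEK + f RAF_RAFPH + f ppMEK_PH + f pMEK_PH + f ppERK_PH + f pERK_PH"
  by (simp add: UNIV_species add.assoc)

lemma quadf_comp: "quadf k v $ s = (\<Sum>i\<leftarrow>[0..<30]. k i * qmn (fst (erk_reactions ! i)) v * rvec i $ s)"
proof -
  have "quadf k v $ s = (\<Sum>i<30. k i * qmn (fst (erk_reactions ! i)) v * rvec i $ s)"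
    by (simp add: quadf_def)
  also have "\<dots> = (\<Sum>i\<leftarrow>[0..<30]. k i * qmn (fst (erk_reactions ! i)) v * rvec i $ s)"
    by (simp add: sum_set_upt_conv_sum_list_nat[symmetric] atLeast_upt)
  finally show ?thesis .
qed

lemma quadf_RAF: "quadf k v $ RAF = - k 0 * (v$RAF * v$RAS)"
  unfolding quadf_comp qmn_def rvec_def cplx_def by (simp add: erk_reactions_def upt30 algebra_simps)

lemma quadf_pRAF: "quadf k v $ pRAF = - k 3 * (v$pRAF * v$RAFPH) - k 6 * (v$MEK * v$pRAF) - k 9 * (v$pMEK * v$pRAF)"
  unfolding quadf_comp qmn_def rvec_def cplx_def by (simp add: erk_reactions_def upt30 algebra_simps)

lemma quadf_MEK: "quadf k v $ MEK = - k 6 * (v$MEK * v$pRAF)"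
  unfolding quadf_comp qmn_def rvec_def cplx_def by (simp add: erk_reactions_def upt30 algebra_simps)

lemma quadf_pMEK: "quadf k v $ pMEK = - k 9 * (v$pMEK * v$pRAF) - k 15 * (v$pMEK * v$PH)"
  unfolding quadf_comp qmn_def rvec_def cplx_def by (simp add: erk_reactions_def upt30 algebra_simps)

lemma quadf_ppMEK: "quadf k v $ ppMEK = - k 12 * (v$ppMEK * v$PH) - k 18 * (v$ERK * v$ppMEK) - k 21 * (v$pERK * v$ppMEK)"
  unfolding quadf_comp qmn_def rvec_def cplx_def by (simp add: erk_reactions_def upt30 algebra_simps)

lemma quadf_ERK: "quadf k v $ ERK = - k 18 * (v$ERK * v$ppMEK)"
  unfolding quadf_comp qmn_def rvec_def cplx_def by (simp add: erk_reactions_def upt30 algebra_simps)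

lemma quadf_pERK: "quadf k v $ pERK = - k 21 * (v$pERK * v$ppMEK) - k 27 * (v$pERK * v$PH)"
  unfolding quadf_comp qmn_def rvec_def cplx_def by (simp add: erk_reactions_def upt30 algebra_simps)

lemma quadf_ppERK: "quadf k v $ ppERK = - k 24 * (v$ppERK * v$PH)"
  unfolding quadf_comp qmn_def rvec_def cplx_def by (simp add: erk_reactions_def upt30 algebra_simps)

lemma quadf_RAS: "quadf k v $ RAS = - k 0 * (v$RAF * v$RAS)"
  unfolding quadf_comp qmn_def rvec_def cplx_def by (simp add: erk_reactions_def upt30 algebra_simps)

lemma quadf_RAFPH: "quadf k v $ RAFPH = - k 3 * (v$pRAF * v$RAFPH)"
  unfolding quadf_comp qmn_def rvec_def cplx_def by (simp add: erk_reactions_def upt30 algebra_simps)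

lemma quadf_PH: "quadf k v $ PH = - k 12 * (v$ppMEK * v$PH) - k 15 * (v$pMEK * v$PH) - k 24 * (v$ppERK * v$PH) - k 27 * (v$pERK * v$PH)"
  unfolding quadf_comp qmn_def rvec_def cplx_def by (simp add: erk_reactions_def upt30 algebra_simps)

lemma quadf_RAS_RAF: "quadf k v $ RAS_RAF = k 0 * (v$RAF * v$RAS)"
  unfolding quadf_comp qmn_def rvec_def cplx_def by (simp add: erk_reactions_def upt30 algebra_simps)

lemma quadf_MEK_pRAF: "quadf k v $ MEK_pRAF = k 6 * (v$MEK * v$pRAF)"
  unfolding quadf_comp qmn_def rvec_def cplx_def by (simp add: erk_reactions_def upt30 algebra_simps)

lemma quadf_pMEK_pRAF: "quadf k v $ pMEK_pRAF = k 9 * (v$pMEK * v$pRAF)"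
  unfolding quadf_comp qmn_def rvec_def cplx_def by (simp add: erk_reactions_def upt30 algebra_simps)

lemma quadf_ERK_ppMEK: "quadf k v $ ERK_ppMEK = k 18 * (v$ERK * v$ppMEK)"
  unfolding quadf_comp qmn_def rvec_def cplx_def by (simp add: erk_reactions_def upt30 algebra_simps)

lemma quadf_pERK_ppMEK: "quadf k v $ pERK_ppMEK = k 21 * (v$pERK * v$ppMEK)"
  unfolding quadf_comp qmn_def rvec_def cplx_def by (simp add: erk_reactions_def upt30 algebra_simps)

lemma quadf_RAF_RAFPH: "quadf k v $ RAF_RAFPH = k 3 * (v$pRAF * v$RAFPH)"
  unfolding quadf_comp qmn_def rvec_def cplx_def by (simp add: erk_reactions_def upt30 algebra_simps)

lemma quadf_ppMEK_PH: "quadf k v $ ppMEK_PH = k 12 * (v$ppMEK * v$PH)"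
  unfolding quadf_comp qmn_def rvec_def cplx_def by (simp add: erk_reactions_def upt30 algebra_simps)

lemma quadf_pMEK_PH: "quadf k v $ pMEK_PH = k 15 * (v$pMEK * v$PH)"
  unfolding quadf_comp qmn_def rvec_def cplx_def by (simp add: erk_reactions_def upt30 algebra_simps)

lemma quadf_ppERK_PH: "quadf k v $ ppERK_PH = k 24 * (v$ppERK * v$PH)"
  unfolding quadf_comp qmn_def rvec_def cplx_def by (simp add: erk_reactions_def upt30 algebra_simps)

lemma quadf_pERK_PH: "quadf k v $ pERK_PH = k 27 * (v$pERK * v$PH)"
  unfolding quadf_comp qmn_def rvec_def cplx_def by (simp add: erk_reactions_def upt30 algebra_simps)

definition kk :: "nat \<Rightarrow> real" where
  "kk i = [(1 / 40), (672123 / 1024000), (3 / 20), 15, (3075 / 2), 150, 20, (1402261 / 20480), 16, (15 / 2), 75, 150, (27 / 4), (389973 / 64000), (3 / 2), 32000, (33991 / 80), 1600, (51 / 2000), (22215349 / 102400000), (2 / 5), (3 / 20), (3 / 500), (3 / 2000), (1 / 400), (15597 / 25600), (3 / 2), (3 / 25), (85191 / 128000), (3 / 5)] ! i"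

lemma kk_vals: "kk 0 = (1 / 40)" "kk 1 = (672123 / 1024000)" "kk 2 = (3 / 20)" "kk 3 = 15" "kk 4 = (3075 / 2)" "kk 5 = 150" "kk 6 = 20" "kk 7 = (1402261 / 20480)" "kk 8 = 16" "kk 9 = (15 / 2)" "kk 10 = 75" "kk 11 = 150" "kk 12 = (27 / 4)" "kk 13 = (389973 / 64000)" "kk 14 = (3 / 2)" "kk 15 = 32000" "kk 16 = (33991 / 80)" "kk 17 = 1600" "kk 18 = (51 / 2000)" "kk 19 = (22215349 / 102400000)" "kk 20 = (2 / 5)" "kk 21 = (3 / 20)" "kk 22 = (3 / 500)" "kk 23 = (3 / 2000)" "kk 24 = (1 / 400)" "kk 25 = (15597 / 25600)" "kk 26 = (3 / 2)" "kk 27 = (3 / 25)" "kk 28 = (85191 / 128000)" "kk 29 = (3 / 5)" "kk (Suc 0) = (672123 / 1024000)"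
  by (simp_all add: kk_def)

lemma kk_pos: "i < 30 \<Longrightarrow> 0 < kk i"
  unfolding upt30' upt30 by (auto simp: kk_vals)

lemma kk_nonneg: "i < 30 \<Longrightarrow> 0 \<le> kk i"
  using kk_pos[of i] by simp

lemmas fld_simps = fld_RAF fld_pRAF fld_MEK fld_pMEK fld_ppMEK fld_ERK fld_pERK fld_ppERK fld_RAS fld_RAFPH fld_PH fld_RAS_RAF fld_MEK_pRAF fld_pMEK_pRAF fld_ERK_ppMEK fld_pERK_ppMEK fld_RAF_RAFPH fld_ppMEK_PH fld_pMEK_PH fld_ppERK_PH fld_pERK_PH

lemmas quadf_simps = quadf_RAF quadf_pRAF quadf_MEK quadf_pMEK quadf_ppMEK quadf_ERK quadf_pERK quadf_ppERK quadf_RAS quadf_RAFPH quadf_PH quadf_RAS_RAF quadf_MEK_pRAF quadf_pMEK_pRAF quadf_ERK_ppMEK quadf_pERK_ppMEK quadf_RAF_RAFPH quadf_ppMEK_PH quadf_pMEK_PH quadf_ppERK_PH quadf_pERK_PH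

definition xsX :: "real^species" where
  "xsX = (\<chi> s. case s of RAF \<Rightarrow> (275241 / 25600) | pRAF \<Rightarrow> 15 | MEK \<Rightarrow> (576647 / 5120) | pMEK \<Rightarrow> (3 / 100) | ppMEK \<Rightarrow> (1 / 5) | ERK \<Rightarrow> (3716197 / 10240) | pERK \<Rightarrow> (5 / 2) | ppERK \<Rightarrow> 1 | RAS \<Rightarrow> 150 | RAFPH \<Rightarrow> (3 / 8) | PH \<Rightarrow> (53997 / 6400) | RAS_RAF \<Rightarrow> 50 | MEK_pRAF \<Rightarrow> 400 | pMEK_pRAF \<Rightarrow> (3 / 200) | ERK_ppMEK \<Rightarrow> 3 | pERK_ppMEK \<Rightarrow> 10 | RAF_RAFPH \<Rightarrow> (1 / 20) | ppMEK_PH \<Rightarrow> (3 / 2) | pMEK_PH \<Rightarrow> 4 | ppERK_PH \<Rightarrow> (1 / 100) | pERK_PH \<Rightarrow> 2)"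

definition QX :: "species \<Rightarrow> species \<Rightarrow> real" where
  "QX a b = (case a of pRAF \<Rightarrow> (case b of pRAF \<Rightarrow> 273262752488776 | pMEK \<Rightarrow> 3256539429 | ppMEK \<Rightarrow> 18136445020980 | pERK \<Rightarrow> 41910621019839 | ppERK \<Rightarrow> 54177790150341 | RAS_RAF \<Rightarrow> 2613331565130 | MEK_pRAF \<Rightarrow> 273303534227724 | pMEK_pRAF \<Rightarrow> 285129434000268 | ERK_ppMEK \<Rightarrow> 36180963058383 | pERK_ppMEK \<Rightarrow> 181625651121057 | RAF_RAFPH \<Rightarrow> 251810506241580 | ppMEK_PH \<Rightarrow> 14588387455785 | pMEK_PH \<Rightarrow> (- 1636535043) | ppERK_PH \<Rightarrow> 52919311232931 | pERK_PH \<Rightarrow> 34500191977251 | _ \<Rightarrow> 0) | pMEK \<Rightarrow> (case b of pRAF \<Rightarrow> 3256539429 | pMEK \<Rightarrow> 22845782880 | ppMEK \<Rightarrow> 256229555996 | pERK \<Rightarrow> 246434616683 | ppERK \<Rightarrow> 212107095457 | RAS_RAF \<Rightarrow> 363463690 | MEK_pRAF \<Rightarrow> 1387143220 | pMEK_pRAF \<Rightarrow> 177252389676 | ERK_ppMEK \<Rightarrow> 431617757507 | pERK_ppMEK \<Rightarrow> 1128450928645 | RAF_RAFPH \<Rightarrow> 3933495036 | ppMEK_PH \<Rightarrow> 222379406349 | pMEK_PH \<Rightarrow> 22647623449 | ppERK_PH \<Rightarrow> 291737662791 | pERK_PH \<Rightarrow> 218452527775 | _ \<Rightarrow> 0) |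 ppMEK \<Rightarrow> (case b of pRAF \<Rightarrow> 18136445020980 | pMEK \<Rightarrow> 256229555996 | ppMEK \<Rightarrow> 393557025709332 | pERK \<Rightarrow> 369335939837574 | ppERK \<Rightarrow> 321228576173459 | RAS_RAF \<Rightarrow> 596224334287 | MEK_pRAF \<Rightarrow> 18115578421811 | pMEK_pRAF \<Rightarrow> 280503701602654 | ERK_ppMEK \<Rightarrow> 657451994327635 | pERK_ppMEK \<Rightarrow> 1717359808185438 | RAF_RAFPH \<Rightarrow> 16711654102428 | ppMEK_PH \<Rightarrow> 343649043781940 | pMEK_PH \<Rightarrow> 146988505689 | ppERK_PH \<Rightarrow> 441476730824563 | pERK_PH \<Rightarrow> 335824607840828 | _ \<Rightarrow> 0) | pERK \<Rightarrow> (case b of pRAF \<Rightarrow> 41910621019839 | pMEK \<Rightarrow> 246434616683 | ppMEK \<Rightarrow> 369335939837574 | pERK \<Rightarrow> 432769918025424 | ppERK \<Rightarrow> 327931144031757 | RAS_RAF \<Rightarrow> 1277735228986 | MEK_pRAF \<Rightarrow> 41898146531776 | pMEK_pRAF \<Rightarrow> 288174955146772 | ERK_ppMEK \<Rightarrow> 634129602860029 | pERK_ppMEK \<Rightarrow> 1737872622974113 | RAF_RAFPH \<Rightarrow> 38619102262348 | ppMEK_PH \<Rightarrow> 320196853569291 | pMEK_PH \<Rightarrow> 143912622327 | ppERK_PH \<Rightarrow> 477867211652765 | pERK_PH \<Rightarrow> 370882870197291 | _ \<Rightarrow> 0) | ppERK \<Rightarrow> (case b of pRAF \<Rightarrow>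 54177790150341 | pMEK \<Rightarrow> 212107095457 | ppMEK \<Rightarrow> 321228576173459 | pERK \<Rightarrow> 327931144031757 | ppERK \<Rightarrow> 2747399349448475 | RAS_RAF \<Rightarrow> 1683380069725 | MEK_pRAF \<Rightarrow> 54169898509900 | pMEK_pRAF \<Rightarrow> 268386331737906 | ERK_ppMEK \<Rightarrow> 539237009316009 | pERK_ppMEK \<Rightarrow> 1693444656164607 | RAF_RAFPH \<Rightarrow> 49925186644098 | ppMEK_PH \<Rightarrow> 278864002129193 | pMEK_PH \<Rightarrow> 122909014239 | ppERK_PH \<Rightarrow> 1096451143077389 | pERK_PH \<Rightarrow> 296295995595591 | _ \<Rightarrow> 0) | RAS_RAF \<Rightarrow> (case b of pRAF \<Rightarrow> 2613331565130 | pMEK \<Rightarrow> 363463690 | ppMEK \<Rightarrow> 596224334287 | pERK \<Rightarrow> 1277735228986 | ppERK \<Rightarrow> 1683380069725 | RAS_RAF \<Rightarrow> 7528575845462 | MEK_pRAF \<Rightarrow> 2613740145855 | pMEK_pRAF \<Rightarrow> 3010440587298 | ERK_ppMEK \<Rightarrow> 1135663705539 | pERK_ppMEK \<Rightarrow> 5614440528999 | RAF_RAFPH \<Rightarrow> 2407277485819 | ppMEK_PH \<Rightarrow> 488840446198 | pMEK_PH \<Rightarrow> 199199430 | ppERK_PH \<Rightarrow> 1622205398095 | pERK_PH \<Rightarrow> 1049856172208 | _ \<Rightarrow> 0) | MEK_pRAF \<Rightarrow> (case b of pRAF \<Rightarrow> 273303534227724 | pMEK \<Rightarrow> 1387143220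 | ppMEK \<Rightarrow> 18115578421811 | pERK \<Rightarrow> 41898146531776 | ppERK \<Rightarrow> 54169898509900 | RAS_RAF \<Rightarrow> 2613740145855 | MEK_pRAF \<Rightarrow> 273371562072451 | pMEK_pRAF \<Rightarrow> 285158877958609 | ERK_ppMEK \<Rightarrow> 36149182198108 | pERK_ppMEK \<Rightarrow> 181562213300241 | RAF_RAFPH \<Rightarrow> 251850177578347 | ppMEK_PH \<Rightarrow> 14569551590222 | pMEK_PH \<Rightarrow> (- 3491161932) | ppERK_PH \<Rightarrow> 52904852336167 | pERK_PH \<Rightarrow> 34488206252833 | _ \<Rightarrow> 0) | pMEK_pRAF \<Rightarrow> (case b of pRAF \<Rightarrow> 285129434000268 | pMEK \<Rightarrow> 177252389676 | ppMEK \<Rightarrow> 280503701602654 | pERK \<Rightarrow> 288174955146772 | ppERK \<Rightarrow> 268386331737906 | RAS_RAF \<Rightarrow> 3010440587298 | MEK_pRAF \<Rightarrow> 285158877958609 | pMEK_pRAF \<Rightarrow> 472261240326853 | ERK_ppMEK \<Rightarrow> 474586095583735 | pERK_ppMEK \<Rightarrow> 1326830286589240 | RAF_RAFPH \<Rightarrow> 262770906994524 | ppMEK_PH \<Rightarrow> 243704478559860 | pMEK_PH \<Rightarrow> 99368874593 | ppERK_PH \<Rightarrow> 347306140974849 | pERK_PH \<Rightarrow> 258440776528352 | _ \<Rightarrow> 0) | ERK_ppMEK \<Rightarrow> (case b of pRAF \<Rightarrow> 36180963058383 | pMEK \<Rightarrow> 431617757507 | ppMEK \<Rightarrow> 657451994327635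 | pERK \<Rightarrow> 634129602860029 | ppERK \<Rightarrow> 539237009316009 | RAS_RAF \<Rightarrow> 1135663705539 | MEK_pRAF \<Rightarrow> 36149182198108 | pMEK_pRAF \<Rightarrow> 474586095583735 | ERK_ppMEK \<Rightarrow> 1138319011663836 | pERK_ppMEK \<Rightarrow> 2857751780372594 | RAF_RAFPH \<Rightarrow> 33337459203655 | ppMEK_PH \<Rightarrow> 569010675487569 | pMEK_PH \<Rightarrow> 249085616427 | ppERK_PH \<Rightarrow> 753584164751936 | pERK_PH \<Rightarrow> 578156987745296 | _ \<Rightarrow> 0) | pERK_ppMEK \<Rightarrow> (case b of pRAF \<Rightarrow> 181625651121057 | pMEK \<Rightarrow> 1128450928645 | ppMEK \<Rightarrow> 1717359808185438 | pERK \<Rightarrow> 1737872622974113 | ppERK \<Rightarrow> 1693444656164607 | RAS_RAF \<Rightarrow> 5614440528999 | MEK_pRAF \<Rightarrow> 181562213300241 | pMEK_pRAF \<Rightarrow> 1326830286589240 | ERK_ppMEK \<Rightarrow> 2857751780372594 | pERK_ppMEK \<Rightarrow> 10000000039115420 | RAF_RAFPH \<Rightarrow> 167362761334960 | ppMEK_PH \<Rightarrow> 1488660360218820 | pMEK_PH \<Rightarrow> 651685924544 | ppERK_PH \<Rightarrow> 2108780186479026 | pERK_PH \<Rightarrow> 1554411953428502 | _ \<Rightarrow> 0) | RAF_RAFPH \<Rightarrow> (case b of pRAF \<Rightarrow> 251810506241580 | pMEK \<Rightarrow> 3933495036 | ppMEK \<Rightarrow> 16711654102428 | pERK \<Rightarrow>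 38619102262348 | ppERK \<Rightarrow> 49925186644098 | RAS_RAF \<Rightarrow> 2407277485819 | MEK_pRAF \<Rightarrow> 251850177578347 | pMEK_pRAF \<Rightarrow> 262770906994524 | ERK_ppMEK \<Rightarrow> 33337459203655 | pERK_ppMEK \<Rightarrow> 167362761334960 | RAF_RAFPH \<Rightarrow> 232074733896903 | ppMEK_PH \<Rightarrow> 13442538966209 | pMEK_PH \<Rightarrow> (- 590860658) | ppERK_PH \<Rightarrow> 48763607064590 | pERK_PH \<Rightarrow> 31790238703398 | _ \<Rightarrow> 0) | ppMEK_PH \<Rightarrow> (case b of pRAF \<Rightarrow> 14588387455785 | pMEK \<Rightarrow> 222379406349 | ppMEK \<Rightarrow> 343649043781940 | pERK \<Rightarrow> 320196853569291 | ppERK \<Rightarrow> 278864002129193 | RAS_RAF \<Rightarrow> 488840446198 | MEK_pRAF \<Rightarrow> 14569551590222 | pMEK_pRAF \<Rightarrow> 243704478559860 | ERK_ppMEK \<Rightarrow> 569010675487569 | pERK_ppMEK \<Rightarrow> 1488660360218820 | RAF_RAFPH \<Rightarrow> 13442538966209 | ppMEK_PH \<Rightarrow> 301896974682822 | pMEK_PH \<Rightarrow> 126980385621 | ppERK_PH \<Rightarrow> 382866224134362 | pERK_PH \<Rightarrow> 290775518991344 | _ \<Rightarrow> 0) | pMEK_PH \<Rightarrow> (case b of pRAF \<Rightarrow> (- 1636535043) | pMEK \<Rightarrow> 22647623449 | ppMEK \<Rightarrow> 146988505689 | pERK \<Rightarrow> 143912622327 | ppERK \<Rightarrow> 122909014239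 | RAS_RAF \<Rightarrow> 199199430 | MEK_pRAF \<Rightarrow> (- 3491161932) | pMEK_pRAF \<Rightarrow> 99368874593 | ERK_ppMEK \<Rightarrow> 249085616427 | pERK_ppMEK \<Rightarrow> 651685924544 | RAF_RAFPH \<Rightarrow> (- 590860658) | ppMEK_PH \<Rightarrow> 126980385621 | pMEK_PH \<Rightarrow> 22743831899 | ppERK_PH \<Rightarrow> 169173059709 | pERK_PH \<Rightarrow> 125219764574 | _ \<Rightarrow> 0) | ppERK_PH \<Rightarrow> (case b of pRAF \<Rightarrow> 52919311232931 | pMEK \<Rightarrow> 291737662791 | ppMEK \<Rightarrow> 441476730824563 | pERK \<Rightarrow> 477867211652765 | ppERK \<Rightarrow> 1096451143077389 | RAS_RAF \<Rightarrow> 1622205398095 | MEK_pRAF \<Rightarrow> 52904852336167 | pMEK_pRAF \<Rightarrow> 347306140974849 | ERK_ppMEK \<Rightarrow> 753584164751936 | pERK_ppMEK \<Rightarrow> 2108780186479026 | RAF_RAFPH \<Rightarrow> 48763607064590 | ppMEK_PH \<Rightarrow> 382866224134362 | pMEK_PH \<Rightarrow> 169173059709 | ppERK_PH \<Rightarrow> 774469429418349 | pERK_PH \<Rightarrow> 421863927127079 | _ \<Rightarrow> 0) | pERK_PH \<Rightarrow> (case b of pRAF \<Rightarrow> 34500191977251 | pMEK \<Rightarrow> 218452527775 | ppMEK \<Rightarrow> 335824607840828 | pERK \<Rightarrow> 370882870197291 | ppERK \<Rightarrow> 296295995595591 | RAS_RAF \<Rightarrow> 1049856172208 | MEK_pRAF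 \<Rightarrow> 34488206252833 | pMEK_pRAF \<Rightarrow> 258440776528352 | ERK_ppMEK \<Rightarrow> 578156987745296 | pERK_ppMEK \<Rightarrow> 1554411953428502 | RAF_RAFPH \<Rightarrow> 31790238703398 | ppMEK_PH \<Rightarrow> 290775518991344 | pMEK_PH \<Rightarrow> 125219764574 | ppERK_PH \<Rightarrow> 421863927127079 | pERK_PH \<Rightarrow> 346724273987958 | _ \<Rightarrow> 0) | _ \<Rightarrow> 0)"

definition RX :: "species \<Rightarrow> species \<Rightarrow> real" where
  "RX a b = (case a of pRAF \<Rightarrow> (case b of pRAF \<Rightarrow> 16530657 | pMEK \<Rightarrow> 197 | ppMEK \<Rightarrow> 1097140 | pERK \<Rightarrow> 2535327 | ppERK \<Rightarrow> 3277413 | RAS_RAF \<Rightarrow> 158090 | MEK_pRAF \<Rightarrow> 16533132 | pMEK_pRAF \<Rightarrow> 17248524 | ERK_ppMEK \<Rightarrow> 2188719 | pERK_ppMEK \<Rightarrow> 10987201 | RAF_RAFPH \<Rightarrow> 15232940 | ppMEK_PH \<Rightarrow> 882505 | pMEK_PH \<Rightarrow> (- 99) | ppERK_PH \<Rightarrow> 3201283 | pERK_PH \<Rightarrow> 2087043 | _ \<Rightarrow> 0) | pMEK \<Rightarrow> (case b of pMEK \<Rightarrow> 150712 | ppMEK \<Rightarrow> 1698693 | pERK \<Rightarrow> 1631822 | ppERK \<Rightarrow> 1403083 | RAS_RAF \<Rightarrow> 2205 | MEK_pRAF \<Rightarrow> (- 12407) | pMEK_pRAF \<Rightarrow> 1153554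 | ERK_ppMEK \<Rightarrow> 2860997 | pERK_ppMEK \<Rightarrow> 7473104 | RAF_RAFPH \<Rightarrow> 6188 | ppMEK_PH \<Rightarrow> 1474372 | pMEK_PH \<Rightarrow> 150271 | ppERK_PH \<Rightarrow> 1931545 | pERK_PH \<Rightarrow> 1446742 | _ \<Rightarrow> 0) | ppMEK \<Rightarrow> (case b of ppMEK \<Rightarrow> 19734934 | pERK \<Rightarrow> 18433422 | ppERK \<Rightarrow> 15974180 | RAS_RAF \<Rightarrow> 21233 | MEK_pRAF \<Rightarrow> (- 127) | pMEK_pRAF \<Rightarrow> 13155358 | ERK_ppMEK \<Rightarrow> 32946181 | pERK_ppMEK \<Rightarrow> 85767239 | RAF_RAFPH \<Rightarrow> (- 584) | ppMEK_PH \<Rightarrow> 17237266 | pMEK_PH \<Rightarrow> (- 5481) | ppERK_PH \<Rightarrow> 22026087 | pERK_PH \<Rightarrow> 16776203 | _ \<Rightarrow> 0) | pERK \<Rightarrow> (case b of pERK \<Rightarrow> 9159040 | ppERK \<Rightarrow> 2497363 | RAS_RAF \<Rightarrow> 52618 | MEK_pRAF \<Rightarrow> 419 | pMEK_pRAF \<Rightarrow> 6949 | ERK_ppMEK \<Rightarrow> 1812525 | pERK_ppMEK \<Rightarrow> 12756576 | RAF_RAFPH \<Rightarrow> (- 78) | ppMEK_PH \<Rightarrow> (- 238922) | pMEK_PH \<Rightarrow> (- 2) | ppERK_PH \<Rightarrow> 6614538 | pERK_PH \<Rightarrow> 5894491 | _ \<Rightarrow> 0) | ppERK \<Rightarrow>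 (case b of ppERK \<Rightarrow> 49732061 | RAS_RAF \<Rightarrow> 13906 | MEK_pRAF \<Rightarrow> 48 | pMEK_pRAF \<Rightarrow> 1485 | ERK_ppMEK \<Rightarrow> (- 55604) | pERK_ppMEK \<Rightarrow> 4927014 | RAF_RAFPH \<Rightarrow> 28 | ppMEK_PH \<Rightarrow> (- 17122) | pMEK_PH \<Rightarrow> (- 1) | ppERK_PH \<Rightarrow> 14374661 | pERK_PH \<Rightarrow> 94893 | _ \<Rightarrow> 0) | RAS_RAF \<Rightarrow> (case b of RAS_RAF \<Rightarrow> 2738619 | MEK_pRAF \<Rightarrow> 9 | pMEK_pRAF \<Rightarrow> 498 | ERK_ppMEK \<Rightarrow> (- 3945) | pERK_ppMEK \<Rightarrow> 474750 | RAF_RAFPH \<Rightarrow> (- 327) | ppMEK_PH \<Rightarrow> (- 2598) | ppERK_PH \<Rightarrow> 35141 | pERK_PH \<Rightarrow> 17907 | _ \<Rightarrow> 0) | MEK_pRAF \<Rightarrow> (case b of MEK_pRAF \<Rightarrow> 163776 | pMEK_pRAF \<Rightarrow> 16692 | ERK_ppMEK \<Rightarrow> 10538 | pERK_ppMEK \<Rightarrow> 45149 | RAF_RAFPH \<Rightarrow> 12496 | ppMEK_PH \<Rightarrow> (- 2671) | pMEK_PH \<Rightarrow> 57 | ppERK_PH \<Rightarrow> 5606 | pERK_PH \<Rightarrow> 2776 | _ \<Rightarrow> 0) | pMEK_pRAF \<Rightarrow> (case b of pMEK_pRAF \<Rightarrow> 595876 | ERK_ppMEK \<Rightarrow> 171372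 | pERK_ppMEK \<Rightarrow> 505091 | RAF_RAFPH \<Rightarrow> 42815 | ppMEK_PH \<Rightarrow> 35458 | pMEK_PH \<Rightarrow> (- 278) | ppERK_PH \<Rightarrow> 53889 | pERK_PH \<Rightarrow> 59336 | _ \<Rightarrow> 0) | ERK_ppMEK \<Rightarrow> (case b of ERK_ppMEK \<Rightarrow> 6047678 | pERK_ppMEK \<Rightarrow> (- 6004360) | RAF_RAFPH \<Rightarrow> (- 1481) | ppMEK_PH \<Rightarrow> (- 763119) | pMEK_PH \<Rightarrow> 1 | ppERK_PH \<Rightarrow> 690675 | pERK_PH \<Rightarrow> 1000273 | _ \<Rightarrow> 0) | pERK_ppMEK \<Rightarrow> (case b of pERK_ppMEK \<Rightarrow> 47369549 | RAF_RAFPH \<Rightarrow> (- 651) | ppMEK_PH \<Rightarrow> (- 251494) | pMEK_PH \<Rightarrow> 1 | ppERK_PH \<Rightarrow> 400165 | pERK_PH \<Rightarrow> 256014 | _ \<Rightarrow> 0) | RAF_RAFPH \<Rightarrow> (case b of RAF_RAFPH \<Rightarrow> 173524 | ppMEK_PH \<Rightarrow> (- 14184) | pMEK_PH \<Rightarrow> (- 27) | ppERK_PH \<Rightarrow> (- 8085) | pERK_PH \<Rightarrow> (- 6808) | _ \<Rightarrow> 0) | ppMEK_PH \<Rightarrow> (case b of ppMEK_PH \<Rightarrow> 1056630 | ppERK_PH \<Rightarrow> (- 22706) | pERK_PH \<Rightarrow> (- 132214) | _ \<Rightarrow> 0) | pMEK_PH \<Rightarrow> (case b of pMEK_PH \<Rightarrow>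 830 | ppERK_PH \<Rightarrow> 876 | pERK_PH \<Rightarrow> 198 | _ \<Rightarrow> 0) | ppERK_PH \<Rightarrow> (case b of ppERK_PH \<Rightarrow> 4931207 | pERK_PH \<Rightarrow> 348912 | _ \<Rightarrow> 0) | pERK_PH \<Rightarrow> (case b of pERK_PH \<Rightarrow> 4782375 | _ \<Rightarrow> 0) | _ \<Rightarrow> 0)"

definition AX :: "species \<Rightarrow> species \<Rightarrow> real" where
  "AX a b = (case a of pRAF \<Rightarrow> (case b of pRAF \<Rightarrow> (- 231257840000) | pMEK \<Rightarrow> 19200000000 | ppMEK \<Rightarrow> 30720000000 | RAS_RAF \<Rightarrow> 15360000 | MEK_pRAF \<Rightarrow> 39369705000 | pMEK_pRAF \<Rightarrow> 53760000000 | ERK_ppMEK \<Rightarrow> 30720000000 | pERK_ppMEK \<Rightarrow> 30720000000 | RAF_RAFPH \<Rightarrow> 180480000000 | ppMEK_PH \<Rightarrow> 30720000000 | pMEK_PH \<Rightarrow> 30720000000 | _ \<Rightarrow> 0) | pMEK \<Rightarrow> (case b of pRAF \<Rightarrow> (- 23040000) | pMEK \<Rightarrow> (- 27657984000000) | MEK_pRAF \<Rightarrow> 1638400000 | pMEK_pRAF \<Rightarrow> 7680000000 | ppMEK_PH \<Rightarrow> 98457600000 | pMEK_PH \<Rightarrow> 141812480000 | ppERK_PH \<Rightarrow> 98304000000 | pERK_PH \<Rightarrow> 98304000000 | _ \<Rightarrow> 0) | ppMEK \<Rightarrow> (case b of ppMEK \<Rightarrow> (- 6817706235) | pERK \<Rightarrow>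 (- 2549760) | ppERK \<Rightarrow> 522240 | pMEK_pRAF \<Rightarrow> 15360000000 | ERK_ppMEK \<Rightarrow> 63697589 | pERK_ppMEK \<Rightarrow> 1290240 | ppMEK_PH \<Rightarrow> 762196800 | pMEK_PH \<Rightarrow> 138240000 | ppERK_PH \<Rightarrow> 138762240 | pERK_PH \<Rightarrow> 138762240 | _ \<Rightarrow> 0) | pERK \<Rightarrow> (case b of ppMEK \<Rightarrow> (- 38400000) | pERK \<Rightarrow> (- 106746240) | ERK_ppMEK \<Rightarrow> 40960000 | pERK_ppMEK \<Rightarrow> 614400 | ppMEK_PH \<Rightarrow> 30720000 | pMEK_PH \<Rightarrow> 30720000 | ppERK_PH \<Rightarrow> 184320000 | pERK_PH \<Rightarrow> 98872800 | _ \<Rightarrow> 0) | ppERK \<Rightarrow> (case b of ppERK \<Rightarrow> (- 2159880) | pERK_ppMEK \<Rightarrow> 153600 | ppMEK_PH \<Rightarrow> 256000 | pMEK_PH \<Rightarrow> 256000 | ppERK_PH \<Rightarrow> 62644000 | pERK_PH \<Rightarrow> 256000 | _ \<Rightarrow> 0) | RAS_RAF \<Rightarrow> (case b of pRAF \<Rightarrow> (- 384000000) | RAS_RAF \<Rightarrow> (- 494096400) | MEK_pRAF \<Rightarrow> (- 384000000) | pMEK_pRAF \<Rightarrow> (- 384000000) | RAF_RAFPH \<Rightarrow> (- 384000000) | _ \<Rightarrow> 0) | MEK_pRAF \<Rightarrow> (case b of pRAF \<Rightarrow> 230658800000 | pMEK \<Rightarrow> (- 30720000000) | ppMEK \<Rightarrow>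 (- 30720000000) | MEK_pRAF \<Rightarrow> (- 39369705000) | pMEK_pRAF \<Rightarrow> (- 30720000000) | ERK_ppMEK \<Rightarrow> (- 30720000000) | pERK_ppMEK \<Rightarrow> (- 30720000000) | ppMEK_PH \<Rightarrow> (- 30720000000) | pMEK_PH \<Rightarrow> (- 30720000000) | _ \<Rightarrow> 0) | pMEK_pRAF \<Rightarrow> (case b of pRAF \<Rightarrow> 23040000 | pMEK \<Rightarrow> 11520000000 | pMEK_pRAF \<Rightarrow> (- 23040000000) | _ \<Rightarrow> 0) | ERK_ppMEK \<Rightarrow> (case b of ppMEK \<Rightarrow> 947630235 | pERK \<Rightarrow> (- 522240) | ppERK \<Rightarrow> (- 522240) | ERK_ppMEK \<Rightarrow> (- 63697589) | pERK_ppMEK \<Rightarrow> (- 522240) | ppERK_PH \<Rightarrow> (- 522240) | pERK_PH \<Rightarrow> (- 522240) | _ \<Rightarrow> 0) | pERK_ppMEK \<Rightarrow> (case b of ppMEK \<Rightarrow> 38400000 | pERK \<Rightarrow> 3072000 | pERK_ppMEK \<Rightarrow> (- 768000) | _ \<Rightarrow> 0) | RAF_RAFPH \<Rightarrow> (case b of pRAF \<Rightarrow> 576000000 | RAF_RAFPH \<Rightarrow> (- 195840000000) | _ \<Rightarrow> 0) | ppMEK_PH \<Rightarrow> (case b of ppMEK \<Rightarrow> 5831676000 | ppMEK_PH \<Rightarrow> (- 915796800) | pMEK_PH \<Rightarrow> (- 138240000) | ppERK_PH \<Rightarrow> (- 138240000) | pERK_PH \<Rightarrow> (- 138240000) | _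 \<Rightarrow> 0) | pMEK_PH \<Rightarrow> (case b of pMEK \<Rightarrow> 27646464000000 | ppMEK_PH \<Rightarrow> (- 98304000000) | pMEK_PH \<Rightarrow> (- 305652480000) | ppERK_PH \<Rightarrow> (- 98304000000) | pERK_PH \<Rightarrow> (- 98304000000) | _ \<Rightarrow> 0) | ppERK_PH \<Rightarrow> (case b of ppERK \<Rightarrow> 2159880 | ppMEK_PH \<Rightarrow> (- 256000) | pMEK_PH \<Rightarrow> (- 256000) | ppERK_PH \<Rightarrow> (- 216244000) | pERK_PH \<Rightarrow> (- 256000) | _ \<Rightarrow> 0) | pERK_PH \<Rightarrow> (case b of pERK \<Rightarrow> 103674240 | ppMEK_PH \<Rightarrow> (- 30720000) | pMEK_PH \<Rightarrow> (- 30720000) | ppERK_PH \<Rightarrow> (- 30720000) | pERK_PH \<Rightarrow> (- 160312800) | _ \<Rightarrow> 0) | _ \<Rightarrow> 0)"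

definition NX :: "species \<Rightarrow> species \<Rightarrow> real" where
  "NX a b = (case a of pRAF \<Rightarrow> (case b of pRAF \<Rightarrow> (- 7360025760759084160000) | pMEK \<Rightarrow> 275266836432384000000 | ppMEK \<Rightarrow> (- 351577269443187880590) | pERK \<Rightarrow> (- 808409509595201479680) | ppERK \<Rightarrow> (- 24283465087977707040) | RAS_RAF \<Rightarrow> 5812156319781001656000 | MEK_pRAF \<Rightarrow> (- 5207497677158433480000) | pMEK_pRAF \<Rightarrow> 5872258757598720000000 | ERK_ppMEK \<Rightarrow> (- 1371096554319074962734) | pERK_ppMEK \<Rightarrow> (- 2707453411491182039040) | RAF_RAFPH \<Rightarrow> 5777015004510720000000 | ppMEK_PH \<Rightarrow> (- 159587326281545808000) | pMEK_PH \<Rightarrow> 855335870530575360000 | ppERK_PH \<Rightarrow> (- 844763163264408685440) | pERK_PH \<Rightarrow> (- 849222108458516432640) | _ \<Rightarrow> 0) | pMEK \<Rightarrow> (case b of pRAF \<Rightarrow> (- 854919664735363040000) | pMEK \<Rightarrow> (- 7359461895587328000000) | ppMEK \<Rightarrow> 100516240581704626170 | pERK \<Rightarrow> (- 2140399242357765120) | ppERK \<Rightarrow> 160795470832510560 | RAS_RAF \<Rightarrow> (- 259131310260552000) | MEK_pRAF \<Rightarrow> 221777075780160690000 | pMEK_pRAF \<Rightarrow> 319130968819200000000 | ERK_ppMEK \<Rightarrow> 112700015729037646042 | pERK_ppMEK \<Rightarrow> 113700759740561387520 | RAF_RAFPH \<Rightarrow> (- 365470003522560000000) | ppMEK_PH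 \<Rightarrow> 145798103534292771200 | pMEK_PH \<Rightarrow> (- 7239077249929927168000) | ppERK_PH \<Rightarrow> 25960798573724078720 | pERK_PH \<Rightarrow> 26784546812635147520 | _ \<Rightarrow> 0) | ppMEK \<Rightarrow> (case b of pRAF \<Rightarrow> 352687249633847840000 | pMEK \<Rightarrow> 62577255235584000000 | ppMEK \<Rightarrow> (- 7359561207068526001590) | pERK \<Rightarrow> (- 1359912487951952555520) | ppERK \<Rightarrow> 243810151713207897600 | RAS_RAF \<Rightarrow> (- 32033003282700933600) | MEK_pRAF \<Rightarrow> 2024736427628827090000 | pMEK_pRAF \<Rightarrow> 4948476051450624000000 | ERK_ppMEK \<Rightarrow> (- 2080902455995702662934) | pERK_ppMEK \<Rightarrow> (- 474428816289486397440) | RAF_RAFPH \<Rightarrow> 452615645209344000000 | ppMEK_PH \<Rightarrow> (- 4653786836777242316800) | pMEK_PH \<Rightarrow> (- 103733141563248128000) | ppERK_PH \<Rightarrow> (- 167775308028913469440) | pERK_PH \<Rightarrow> 299613831054976972160 | _ \<Rightarrow> 0) | pERK \<Rightarrow> (case b of pRAF \<Rightarrow> 808673650489631200000 | pMEK \<Rightarrow> 277584920036352000000 | ppMEK \<Rightarrow> 1359822234732971237850 | pERK \<Rightarrow> (- 7359405979161682026240) | ppERK \<Rightarrow> 371116142312831719680 | RAS_RAF \<Rightarrow> 24845524139137579200 | MEK_pRAF \<Rightarrow> 808450126218269230000 | pMEK_pRAF \<Rightarrow> 1709922844180992000000 | ERK_ppMEK \<Rightarrow> 2485508397215781358010 |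 pERK_ppMEK \<Rightarrow> (- 979683361144500940800) | RAF_RAFPH \<Rightarrow> 746488548759552000000 | ppMEK_PH \<Rightarrow> 1267189679851014012800 | pMEK_PH \<Rightarrow> (- 1511465786494976000) | ppERK_PH \<Rightarrow> 4629308728786124057600 | pERK_PH \<Rightarrow> 53084201183420830400 | _ \<Rightarrow> 0) | ppERK \<Rightarrow> (case b of pRAF \<Rightarrow> 28567940350539040000 | pMEK \<Rightarrow> (- 1060369438162944000000) | ppMEK \<Rightarrow> (- 244228476248780833500) | pERK \<Rightarrow> (- 371118744527629447680) | ppERK \<Rightarrow> (- 7359405472202293083360) | RAS_RAF \<Rightarrow> 837648852732540000 | MEK_pRAF \<Rightarrow> 23579749101177410000 | pMEK_pRAF \<Rightarrow> (- 137744824968960000000) | ERK_ppMEK \<Rightarrow> (- 424241437919683183900) | pERK_ppMEK \<Rightarrow> (- 603604088483299430400) | RAF_RAFPH \<Rightarrow> 25192013233920000000 | ppMEK_PH \<Rightarrow> (- 210708872174873030400) | pMEK_PH \<Rightarrow> 10745253730220032000 | ppERK_PH \<Rightarrow> 1720627028538988464000 | pERK_PH \<Rightarrow> (- 285546712907041622400) | _ \<Rightarrow> 0) | RAS_RAF \<Rightarrow> (case b of pRAF \<Rightarrow> (- 5812553033883161760000) | pMEK \<Rightarrow> 33262566435840000000 | ppMEK \<Rightarrow> 32087768808712480440 | pERK \<Rightarrow> (- 24832294627816742400) | ppERK \<Rightarrow> (- 827693534005697760) | RAS_RAF \<Rightarrow> (- 7359402899058667473600) | MEK_pRAF \<Rightarrow>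 (- 5812926656719296250000) | pMEK_pRAF \<Rightarrow> (- 5784238838985216000000) | ERK_ppMEK \<Rightarrow> 10846895493676497144 | pERK_ppMEK \<Rightarrow> (- 31287398046765404160) | RAF_RAFPH \<Rightarrow> (- 5356230145575936000000) | ppMEK_PH \<Rightarrow> 34859861285925110400 | pMEK_PH \<Rightarrow> (- 65716735308800000) | ppERK_PH \<Rightarrow> (- 22734163068223608960) | pERK_PH \<Rightarrow> (- 22491192824603372160) | _ \<Rightarrow> 0) | MEK_pRAF \<Rightarrow> (case b of pRAF \<Rightarrow> 5207053090092954400000 | pMEK \<Rightarrow> (- 800246531790336000000) | ppMEK \<Rightarrow> (- 2024889644412652048410) | pERK \<Rightarrow> (- 808481679800031571200) | ppERK \<Rightarrow> (- 24300434331711554640) | RAS_RAF \<Rightarrow> 5813005378270820436000 | MEK_pRAF \<Rightarrow> (- 7359279398488935070000) | pMEK_pRAF \<Rightarrow> 4050653306668800000000 | ERK_ppMEK \<Rightarrow> (- 3044728779206618575866) | pERK_ppMEK \<Rightarrow> (- 4381395114391927541760) | RAF_RAFPH \<Rightarrow> 4958808520285440000000 | ppMEK_PH \<Rightarrow> (- 1834402036939719753600) | pMEK_PH \<Rightarrow> (- 215717801768390144000) | ppERK_PH \<Rightarrow> (- 846814608106121146560) | pERK_PH \<Rightarrow> (- 851296415033540813760) | _ \<Rightarrow> 0) | pMEK_pRAF \<Rightarrow> (case b of pRAF \<Rightarrow> (- 5871159439879083680000) | pMEK \<Rightarrow> (- 783705965320704000000) | ppMEK \<Rightarrow> (- 4948594068082063119930)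 | pERK \<Rightarrow> (- 1709968305707429268480) | ppERK \<Rightarrow> 138199456284017410800 | RAS_RAF \<Rightarrow> 5784280499292577905600 | MEK_pRAF \<Rightarrow> (- 4049597648389466010000) | pMEK_pRAF \<Rightarrow> (- 7358380761598464000000) | ERK_ppMEK \<Rightarrow> (- 2926905602733420387418) | pERK_ppMEK \<Rightarrow> (- 3182351947881557422080) | RAF_RAFPH \<Rightarrow> (- 4100373249467904000000) | ppMEK_PH \<Rightarrow> (- 3425117463118991097600) | pMEK_PH \<Rightarrow> (- 319810598171913216000) | ppERK_PH \<Rightarrow> (- 941881270302854546880) | pERK_PH \<Rightarrow> (- 633750429281784986880) | _ \<Rightarrow> 0) | ERK_ppMEK \<Rightarrow> (case b of pRAF \<Rightarrow> 1372843206003349600000 | pMEK \<Rightarrow> 125861884162560000000 | ppMEK \<Rightarrow> 2080502432083618042470 | pERK \<Rightarrow> (- 2485543042444018456320) | ppERK \<Rightarrow> 423672285898584797040 | RAS_RAF \<Rightarrow> (- 10775511881434159200) | MEK_pRAF \<Rightarrow> 3044541529290923350000 | pMEK_pRAF \<Rightarrow> 2926834061476608000000 | ERK_ppMEK \<Rightarrow> (- 7359626146284836558778) | pERK_ppMEK \<Rightarrow> (- 984428333080090644480) | RAF_RAFPH \<Rightarrow> 1392214940483328000000 | ppMEK_PH \<Rightarrow> 1321000858499628473600 | pMEK_PH \<Rightarrow> (- 115619961006554624000) | ppERK_PH \<Rightarrow> (- 275331306710284396480) | pERK_PH \<Rightarrow> (- 248058994202448719680) | _ \<Rightarrow> 0)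 | pERK_ppMEK \<Rightarrow> (case b of pRAF \<Rightarrow> 2711307975659773440000 | pMEK \<Rightarrow> 1679866825592832000000 | ppMEK \<Rightarrow> 473433353252004187320 | pERK \<Rightarrow> 979644606106086915840 | ppERK \<Rightarrow> 603033203320973920560 | RAS_RAF \<Rightarrow> 31390295653868032800 | MEK_pRAF \<Rightarrow> 4380874259450262560000 | pMEK_pRAF \<Rightarrow> 3182440731433728000000 | ERK_ppMEK \<Rightarrow> 983706698420589026232 | pERK_ppMEK \<Rightarrow> (- 7359908213399095726080) | RAF_RAFPH \<Rightarrow> 2636778653330688000000 | ppMEK_PH \<Rightarrow> 350777652489538156800 | pMEK_PH \<Rightarrow> (- 134373706925017088000) | ppERK_PH \<Rightarrow> 1067982799130050509120 | pERK_PH \<Rightarrow> 835268239873178214720 | _ \<Rightarrow> 0) | RAF_RAFPH \<Rightarrow> (case b of pRAF \<Rightarrow> (- 5778438972788296160000) | pMEK \<Rightarrow> (- 165274943496192000000) | ppMEK \<Rightarrow> (- 451958321224613291310) | pERK \<Rightarrow> (- 744995161450991976960) | ppERK \<Rightarrow> (- 22383065916505055040) | RAS_RAF \<Rightarrow> 5356764472652899696800 | MEK_pRAF \<Rightarrow> (- 4959597483519914670000) | pMEK_pRAF \<Rightarrow> 4100969774608128000000 | ERK_ppMEK \<Rightarrow> (- 1391777473897053523406) | pERK_ppMEK \<Rightarrow> (- 2623380182388738600960) | RAF_RAFPH \<Rightarrow> (- 7360228887359232000000) | ppMEK_PH \<Rightarrow> (- 272643710300905705600) | pMEK_PH \<Rightarrow>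 363431550853907456000 | ppERK_PH \<Rightarrow> (- 775290359593804552960) | pERK_PH \<Rightarrow> (- 779407925110483480960) | _ \<Rightarrow> 0) | ppMEK_PH \<Rightarrow> (case b of pRAF \<Rightarrow> 162659016913789280000 | pMEK \<Rightarrow> (- 22791288013824000000) | ppMEK \<Rightarrow> 4652939723462751849630 | pERK \<Rightarrow> (- 1268194661534180532480) | ppERK \<Rightarrow> 213878921445153461520 | RAS_RAF \<Rightarrow> (- 34913346639935774400) | MEK_pRAF \<Rightarrow> 1836388317314277030000 | pMEK_pRAF \<Rightarrow> 3426740704452096000000 | ERK_ppMEK \<Rightarrow> (- 1322183360922011336962) | pERK_ppMEK \<Rightarrow> (- 357722603820190187520) | RAF_RAFPH \<Rightarrow> 275244292732416000000 | ppMEK_PH \<Rightarrow> (- 7359964841195499603200) | pMEK_PH \<Rightarrow> (- 96104018753827328000) | ppERK_PH \<Rightarrow> (- 410177216973487929920) | pERK_PH \<Rightarrow> 98631562324752297280 | _ \<Rightarrow> 0) | pMEK_PH \<Rightarrow> (case b of pRAF \<Rightarrow> (- 850909666812169440000) | pMEK \<Rightarrow> 7238958568650240000000 | ppMEK \<Rightarrow> 101795419305106390860 | pERK \<Rightarrow> (- 1765912242296359680) | ppERK \<Rightarrow> 93211182835860960 | RAS_RAF \<Rightarrow> (- 247121799011064000) | MEK_pRAF \<Rightarrow> 220090974365438690000 | pMEK_pRAF \<Rightarrow> 322820405813760000000 | ERK_ppMEK \<Rightarrow> 112730918485434618636 | pERK_ppMEK \<Rightarrow> 113281019914064732160 | RAF_RAFPH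 \<Rightarrow> (- 359448371758080000000) | ppMEK_PH \<Rightarrow> 94606952752076044800 | pMEK_PH \<Rightarrow> (- 7359381031361607680000) | ppERK_PH \<Rightarrow> (- 25897991203674426240) | pERK_PH \<Rightarrow> (- 25204405781475109440) | _ \<Rightarrow> 0) | ppERK_PH \<Rightarrow> (case b of pRAF \<Rightarrow> 848533341524133760000 | pMEK \<Rightarrow> (- 116497441337856000000) | ppMEK \<Rightarrow> 166969646028250493310 | pERK \<Rightarrow> (- 4630289610850543096320) | ppERK \<Rightarrow> (- 1716873699984237181440) | RAS_RAF \<Rightarrow> 22629546557027604000 | MEK_pRAF \<Rightarrow> 848597228144858040000 | pMEK_pRAF \<Rightarrow> 943647794906880000000 | ERK_ppMEK \<Rightarrow> 274254495473746392606 | pERK_ppMEK \<Rightarrow> (- 1074580442461266186240) | RAF_RAFPH \<Rightarrow> 779113834425600000000 | ppMEK_PH \<Rightarrow> 409831585810568233600 | pMEK_PH \<Rightarrow> 26436386641515520000 | ppERK_PH \<Rightarrow> (- 7359090155551287511040) | pERK_PH \<Rightarrow> (- 623557227615379629440) | _ \<Rightarrow> 0) | pERK_PH \<Rightarrow> (case b of pRAF \<Rightarrow> 851734509127305280000 | pMEK \<Rightarrow> 181861811730432000000 | ppMEK \<Rightarrow> (- 300293678622999188040) | pERK \<Rightarrow> (- 54063230303064948480) | ppERK \<Rightarrow> 289312003749841866240 | RAS_RAF \<Rightarrow> 22385587129645017600 | MEK_pRAF \<Rightarrow> 853284571853289380000 | pMEK_pRAF \<Rightarrow> 635360950112256000000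 | ERK_ppMEK \<Rightarrow> 247150961710674864696 | pERK_ppMEK \<Rightarrow> (- 841695577997969264640) | RAF_RAFPH \<Rightarrow> 782311221336576000000 | ppMEK_PH \<Rightarrow> (- 99864703802198233600) | pMEK_PH \<Rightarrow> 22714641469330944000 | ppERK_PH \<Rightarrow> 623136324918402959360 | pERK_PH \<Rightarrow> (- 7360145597647195627840) | _ \<Rightarrow> 0) | _ \<Rightarrow> 0)"

definition DX :: real where "DX = 102400000"

definition muX :: real where "muX = 131637127"

definition qmX :: real where "qmX = 10000000039115420"

lemma ss_X: "positive_steady_state kk xsX"
  unfolding positive_steady_state_def
proof
  show "\<forall>s. 0 < xsX $ s" by (simp add: xsX_def split: species.split)
  show "fld kk xsX = 0"
    unfolding vec_eq_iff
  proof
    fix s show "fld kk xsX $ s = 0 $ s"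
      by (cases s) (simp_all add: fld_simps kk_vals xsX_def)
  qed
qed

lemma lin_X:
  assumes "a \<in> REDs" "v \<in> Kset"
  shows "fld kk (xsX + v) $ a = (\<Sum>c\<in>UNIV. AX a c * v$c) / DX + quadf kk v $ a"
proof -
  note e = assms(2)[unfolded Kset_def, simplified]
  show ?thesis using assms(1) unfolding REDs_def sum_UNIV_species
    by (auto simp: e fld_simps quadf_simps kk_vals xsX_def AX_def DX_def field_simps)
qed

lemma Qdef_X: "QX a b = (\<Sum>k\<in>UNIV. RX k a * RX k b) + (if a = b \<and> a \<in> REDs then muX else 0)"
  unfolding sum_UNIV_species by (cases a; cases b) (simp_all add: QX_def RX_def REDs_def muX_def)

lemma Rsupp_X: "a \<notin> REDs \<Longrightarrow> RX k a = 0"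
  by (cases a; cases k) (simp_all add: RX_def REDs_def)

lemma qmb_X: "\<bar>QX a b\<bar> \<le> qmX"
  by (cases a; cases b) (simp_all add: QX_def qmX_def)

lemma Nt_X: "2 * (\<Sum>a\<in>UNIV. QX a b * AX a c) = NX b c"
  unfolding sum_UNIV_species by (cases b; cases c) (simp_all add: QX_def AX_def NX_def)

lemma dom_X: "NX b b + (\<Sum>c\<in>UNIV-{b}. \<bar>NX b c + NX c b\<bar> / 2) \<le> (if b \<in> REDs then -1 else 0)"
  by (cases b) (simp_all add: sum_diff1 sum_UNIV_species NX_def REDs_def)

lemma stable_X: "asympt_stable kk xsX"
  by (rule cert_stable[OF kk_nonneg lin_X _ Qdef_X Rsupp_X _ qmb_X Nt_X dom_X]) (simp_all add: DX_def muX_def)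

definition xsY :: "real^species" where
  "xsY = (\<chi> s. case s of RAF \<Rightarrow> (275241 / 5120) | pRAF \<Rightarrow> (375 / 8) | MEK \<Rightarrow> (576647 / 25600) | pMEK \<Rightarrow> (3 / 80) | ppMEK \<Rightarrow> (25 / 16) | ERK \<Rightarrow> (3716197 / 51200) | pERK \<Rightarrow> (125 / 16) | ppERK \<Rightarrow> (3125 / 64) | RAS \<Rightarrow> 75 | RAFPH \<Rightarrow> (3 / 10) | PH \<Rightarrow> (53997 / 12800) | RAS_RAF \<Rightarrow> 125 | MEK_pRAF \<Rightarrow> 250 | pMEK_pRAF \<Rightarrow> (15 / 256) | ERK_ppMEK \<Rightarrow> (75 / 16) | pERK_ppMEK \<Rightarrow> (15625 / 64) | RAF_RAFPH \<Rightarrow> (1 / 8) | ppMEK_PH \<Rightarrow> (375 / 64) | pMEK_PH \<Rightarrow> (5 / 2) | ppERK_PH \<Rightarrow> (125 / 512) | pERK_PH \<Rightarrow> (25 / 8))"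

definition QY :: "species \<Rightarrow> species \<Rightarrow> real" where
  "QY a b = (case a of pRAF \<Rightarrow> (case b of pRAF \<Rightarrow> 1056099560740674 | pMEK \<Rightarrow> 5151824712720 | ppMEK \<Rightarrow> 1671359907098400 | pERK \<Rightarrow> 2054922809653440 | ppERK \<Rightarrow> (- 149561862821760) | RAS_RAF \<Rightarrow> 33671106229440 | MEK_pRAF \<Rightarrow> 1056099725345280 | pMEK_pRAF \<Rightarrow> 2171688598777440 | ERK_ppMEK \<Rightarrow> 2954389436990400 | pERK_ppMEK \<Rightarrow> 1925358524210400 | RAF_RAFPH \<Rightarrow> 989792011533840 | ppMEK_PH \<Rightarrow> 1661180951271120 | pMEK_PH \<Rightarrow> 2259986160240 | ppERK_PH \<Rightarrow> 2547660270768240 | pERK_PH \<Rightarrow> 2963606558982720 | _ \<Rightarrow> 0) | pMEK \<Rightarrow> (case b of pRAF \<Rightarrow> 5151824712720 | pMEK \<Rightarrow> 74719311571 | ppMEK \<Rightarrow> 10456893462534 | pERK \<Rightarrow> 11924996326164 | ppERK \<Rightarrow> (- 242982755456) | RAS_RAF \<Rightarrow> 190624966068 | MEK_pRAF \<Rightarrow> 5131508443768 | pMEK_pRAF \<Rightarrow> 12129527213546 | ERK_ppMEK \<Rightarrow> 17611651076220 | pERK_ppMEK \<Rightarrow> 12234734978082 | RAF_RAFPH \<Rightarrow> 4826699026781 | ppMEK_PH \<Rightarrow> 10388016374053 | pMEK_PH \<Rightarrow> 56236775507 | ppERK_PH \<Rightarrow> 15255976070547 | pERK_PH \<Rightarrow>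 17576141925616 | _ \<Rightarrow> 0) | ppMEK \<Rightarrow> (case b of pRAF \<Rightarrow> 1671359907098400 | pMEK \<Rightarrow> 10456893462534 | ppMEK \<Rightarrow> 3373094562530776 | pERK \<Rightarrow> 3863044704351873 | ppERK \<Rightarrow> (- 125152725721754) | RAS_RAF \<Rightarrow> 61895599993841 | MEK_pRAF \<Rightarrow> 1671323830023521 | pMEK_pRAF \<Rightarrow> 3922850549251721 | ERK_ppMEK \<Rightarrow> 5695792072328492 | pERK_ppMEK \<Rightarrow> 3942745820388934 | RAF_RAFPH \<Rightarrow> 1566425145339379 | ppMEK_PH \<Rightarrow> 3354748186818562 | pMEK_PH \<Rightarrow> 4620167516679 | ppERK_PH \<Rightarrow> 4929240474375338 | pERK_PH \<Rightarrow> 5698231855464961 | _ \<Rightarrow> 0) | pERK \<Rightarrow> (case b of pRAF \<Rightarrow> 2054922809653440 | pMEK \<Rightarrow> 11924996326164 | ppMEK \<Rightarrow> 3863044704351873 | pERK \<Rightarrow> 4846794317675392 | ppERK \<Rightarrow> (- 342628371134372) | RAS_RAF \<Rightarrow> 76422806220431 | MEK_pRAF \<Rightarrow> 2054956308756241 | pMEK_pRAF \<Rightarrow> 4633617346271172 | ERK_ppMEK \<Rightarrow> 6794994696204415 | pERK_ppMEK \<Rightarrow> 4591866397209004 | RAF_RAFPH \<Rightarrow> 1925921365355417 | ppMEK_PH \<Rightarrow> 3840781274435296 | pMEK_PH \<Rightarrow> 5240574492764 | ppERK_PH \<Rightarrow> 5942383159016344 | pERK_PH \<Rightarrow> 6887094997288207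 | _ \<Rightarrow> 0) | ppERK \<Rightarrow> (case b of pRAF \<Rightarrow> (- 149561862821760) | pMEK \<Rightarrow> (- 242982755456) | ppMEK \<Rightarrow> (- 125152725721754) | pERK \<Rightarrow> (- 342628371134372) | ppERK \<Rightarrow> 7778149680161639 | RAS_RAF \<Rightarrow> (- 5783809174234) | MEK_pRAF \<Rightarrow> (- 149577273590120) | pMEK_pRAF \<Rightarrow> (- 233182945934504) | ERK_ppMEK \<Rightarrow> (- 424536988761633) | pERK_ppMEK \<Rightarrow> (- 610584619173454) | RAF_RAFPH \<Rightarrow> (- 140181917688465) | ppMEK_PH \<Rightarrow> (- 98944431481015) | pMEK_PH \<Rightarrow> (- 25974783317) | ppERK_PH \<Rightarrow> 1989051713222205 | pERK_PH \<Rightarrow> (- 200245529737500) | _ \<Rightarrow> 0) | RAS_RAF \<Rightarrow> (case b of pRAF \<Rightarrow> 33671106229440 | pMEK \<Rightarrow> 190624966068 | ppMEK \<Rightarrow> 61895599993841 | pERK \<Rightarrow> 76422806220431 | ppERK \<Rightarrow> (- 5783809174234) | RAS_RAF \<Rightarrow> 13458699505192 | MEK_pRAF \<Rightarrow> 33671782327647 | pMEK_pRAF \<Rightarrow> 74989616800297 | ERK_ppMEK \<Rightarrow> 109725461316982 | pERK_ppMEK \<Rightarrow> 71210457701067 | RAF_RAFPH \<Rightarrow> 31556824041543 | ppMEK_PH \<Rightarrow> 61516160250509 | pMEK_PH \<Rightarrow> 83521760137 | ppERK_PH \<Rightarrow> 94563650967019 | pERK_PH \<Rightarrow> 110048565457693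 | _ \<Rightarrow> 0) | MEK_pRAF \<Rightarrow> (case b of pRAF \<Rightarrow> 1056099725345280 | pMEK \<Rightarrow> 5131508443768 | ppMEK \<Rightarrow> 1671323830023521 | pERK \<Rightarrow> 2054956308756241 | ppERK \<Rightarrow> (- 149577273590120) | RAS_RAF \<Rightarrow> 33671782327647 | MEK_pRAF \<Rightarrow> 1056166338546892 | pMEK_pRAF \<Rightarrow> 2171691621271595 | ERK_ppMEK \<Rightarrow> 2954382397566269 | pERK_ppMEK \<Rightarrow> 1925318219003681 | RAF_RAFPH \<Rightarrow> 989808669148763 | ppMEK_PH \<Rightarrow> 1661144359119097 | pMEK_PH \<Rightarrow> 2239844194824 | ppERK_PH \<Rightarrow> 2547689040934246 | pERK_PH \<Rightarrow> 2963642719952568 | _ \<Rightarrow> 0) | pMEK_pRAF \<Rightarrow> (case b of pRAF \<Rightarrow> 2171688598777440 | pMEK \<Rightarrow> 12129527213546 | ppMEK \<Rightarrow> 3922850549251721 | pERK \<Rightarrow> 4633617346271172 | ppERK \<Rightarrow> (- 233182945934504) | RAS_RAF \<Rightarrow> 74989616800297 | MEK_pRAF \<Rightarrow> 2171691621271595 | pMEK_pRAF \<Rightarrow> 4790546163677545 | ERK_ppMEK \<Rightarrow> 6756522554370717 | pERK_ppMEK \<Rightarrow> 4557094691400387 | RAF_RAFPH \<Rightarrow> 2035365684439169 | ppMEK_PH \<Rightarrow> 3900520806800268 | pMEK_PH \<Rightarrow> 5340672576286 | ppERK_PH \<Rightarrow> 5838095554548626 | pERK_PH \<Rightarrow> 6767427736555796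 | _ \<Rightarrow> 0) | ERK_ppMEK \<Rightarrow> (case b of pRAF \<Rightarrow> 2954389436990400 | pMEK \<Rightarrow> 17611651076220 | ppMEK \<Rightarrow> 5695792072328492 | pERK \<Rightarrow> 6794994696204415 | ppERK \<Rightarrow> (- 424536988761633) | RAS_RAF \<Rightarrow> 109725461316982 | MEK_pRAF \<Rightarrow> 2954382397566269 | pMEK_pRAF \<Rightarrow> 6756522554370717 | ERK_ppMEK \<Rightarrow> 9918852958673446 | pERK_ppMEK \<Rightarrow> 6601309636506855 | RAF_RAFPH \<Rightarrow> 2768915280251524 | ppMEK_PH \<Rightarrow> 5661568816418845 | pMEK_PH \<Rightarrow> 7755410467401 | ppERK_PH \<Rightarrow> 8513352995948636 | pERK_PH \<Rightarrow> 9890507678884870 | _ \<Rightarrow> 0) | pERK_ppMEK \<Rightarrow> (case b of pRAF \<Rightarrow> 1925358524210400 | pMEK \<Rightarrow> 12234734978082 | ppMEK \<Rightarrow> 3942745820388934 | pERK \<Rightarrow> 4591866397209004 | ppERK \<Rightarrow> (- 610584619173454) | RAS_RAF \<Rightarrow> 71210457701067 | MEK_pRAF \<Rightarrow> 1925318219003681 | pMEK_pRAF \<Rightarrow> 4557094691400387 | ERK_ppMEK \<Rightarrow> 6601309636506855 | pERK_ppMEK \<Rightarrow> 4953845519006854 | RAF_RAFPH \<Rightarrow> 1804473281615046 | ppMEK_PH \<Rightarrow> 3917387404066824 | pMEK_PH \<Rightarrow> 5412326409365 | ppERK_PH \<Rightarrow> 5678525188893321 | pERK_PH \<Rightarrow>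 6706229637401530 | _ \<Rightarrow> 0) | RAF_RAFPH \<Rightarrow> (case b of pRAF \<Rightarrow> 989792011533840 | pMEK \<Rightarrow> 4826699026781 | ppMEK \<Rightarrow> 1566425145339379 | pERK \<Rightarrow> 1925921365355417 | ppERK \<Rightarrow> (- 140181917688465) | RAS_RAF \<Rightarrow> 31556824041543 | MEK_pRAF \<Rightarrow> 989808669148763 | pMEK_pRAF \<Rightarrow> 2035365684439169 | ERK_ppMEK \<Rightarrow> 2768915280251524 | pERK_ppMEK \<Rightarrow> 1804473281615046 | RAF_RAFPH \<Rightarrow> 927683220808150 | ppMEK_PH \<Rightarrow> 1556885205830213 | pMEK_PH \<Rightarrow> 2116371563659 | ppERK_PH \<Rightarrow> 2387718412782491 | pERK_PH \<Rightarrow> 2777553750423809 | _ \<Rightarrow> 0) | ppMEK_PH \<Rightarrow> (case b of pRAF \<Rightarrow> 1661180951271120 | pMEK \<Rightarrow> 10388016374053 | ppMEK \<Rightarrow> 3354748186818562 | pERK \<Rightarrow> 3840781274435296 | ppERK \<Rightarrow> (- 98944431481015) | RAS_RAF \<Rightarrow> 61516160250509 | MEK_pRAF \<Rightarrow> 1661144359119097 | pMEK_pRAF \<Rightarrow> 3900520806800268 | ERK_ppMEK \<Rightarrow> 5661568816418845 | pERK_ppMEK \<Rightarrow> 3917387404066824 | RAF_RAFPH \<Rightarrow> 1556885205830213 | ppMEK_PH \<Rightarrow> 3338891989371665 | pMEK_PH \<Rightarrow> 4582741743550 | ppERK_PH \<Rightarrow> 4907826616819832 | pERK_PH \<Rightarrow>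 5664416019896025 | _ \<Rightarrow> 0) | pMEK_PH \<Rightarrow> (case b of pRAF \<Rightarrow> 2259986160240 | pMEK \<Rightarrow> 56236775507 | ppMEK \<Rightarrow> 4620167516679 | pERK \<Rightarrow> 5240574492764 | ppERK \<Rightarrow> (- 25974783317) | RAS_RAF \<Rightarrow> 83521760137 | MEK_pRAF \<Rightarrow> 2239844194824 | pMEK_pRAF \<Rightarrow> 5340672576286 | ERK_ppMEK \<Rightarrow> 7755410467401 | pERK_ppMEK \<Rightarrow> 5412326409365 | RAF_RAFPH \<Rightarrow> 2116371563659 | ppMEK_PH \<Rightarrow> 4582741743550 | pMEK_PH \<Rightarrow> 48571111361 | ppERK_PH \<Rightarrow> 6726591494091 | pERK_PH \<Rightarrow> 7715844269351 | _ \<Rightarrow> 0) | ppERK_PH \<Rightarrow> (case b of pRAF \<Rightarrow> 2547660270768240 | pMEK \<Rightarrow> 15255976070547 | ppMEK \<Rightarrow> 4929240474375338 | pERK \<Rightarrow> 5942383159016344 | ppERK \<Rightarrow> 1989051713222205 | RAS_RAF \<Rightarrow> 94563650967019 | MEK_pRAF \<Rightarrow> 2547689040934246 | pMEK_pRAF \<Rightarrow> 5838095554548626 | ERK_ppMEK \<Rightarrow> 8513352995948636 | pERK_ppMEK \<Rightarrow> 5678525188893321 | RAF_RAFPH \<Rightarrow> 2387718412782491 | ppMEK_PH \<Rightarrow> 4907826616819832 | pMEK_PH \<Rightarrow> 6726591494091 | ppERK_PH \<Rightarrow> 8153247981669933 | pERK_PH \<Rightarrow> 8655018047111490 | _ \<Rightarrow>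 0) | pERK_PH \<Rightarrow> (case b of pRAF \<Rightarrow> 2963606558982720 | pMEK \<Rightarrow> 17576141925616 | ppMEK \<Rightarrow> 5698231855464961 | pERK \<Rightarrow> 6887094997288207 | ppERK \<Rightarrow> (- 200245529737500) | RAS_RAF \<Rightarrow> 110048565457693 | MEK_pRAF \<Rightarrow> 2963642719952568 | pMEK_pRAF \<Rightarrow> 6767427736555796 | ERK_ppMEK \<Rightarrow> 9890507678884870 | pERK_ppMEK \<Rightarrow> 6706229637401530 | RAF_RAFPH \<Rightarrow> 2777553750423809 | ppMEK_PH \<Rightarrow> 5664416019896025 | pMEK_PH \<Rightarrow> 7715844269351 | ppERK_PH \<Rightarrow> 8655018047111490 | pERK_PH \<Rightarrow> 10000000088161161 | _ \<Rightarrow> 0) | _ \<Rightarrow> 0)"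

definition RY :: "species \<Rightarrow> species \<Rightarrow> real" where
  "RY a b = (case a of pRAF \<Rightarrow> (case b of pRAF \<Rightarrow> 32497680 | pMEK \<Rightarrow> 158529 | ppMEK \<Rightarrow> 51430130 | pERK \<Rightarrow> 63232908 | ppERK \<Rightarrow> (- 4602232) | RAS_RAF \<Rightarrow> 1036108 | MEK_pRAF \<Rightarrow> 32497696 | pMEK_pRAF \<Rightarrow> 66825958 | ERK_ppMEK \<Rightarrow> 90910780 | pERK_ppMEK \<Rightarrow> 59246030 | RAF_RAFPH \<Rightarrow> 30457313 | ppMEK_PH \<Rightarrow> 51116909 | pMEK_PH \<Rightarrow> 69543 | ppERK_PH \<Rightarrow> 78395143 | pERK_PH \<Rightarrow> 91194404 | _ \<Rightarrow> 0) | pMEK \<Rightarrow> (case b of pMEK \<Rightarrow> 221884 | ppMEK \<Rightarrow> 10382571 | pERK \<Rightarrow> 8566398 | ppERK \<Rightarrow> 2193058 | RAS_RAF \<Rightarrow> 118854 | MEK_pRAF \<Rightarrow> (- 91574) | pMEK_pRAF \<Rightarrow> 6921071 | ERK_ppMEK \<Rightarrow> 14420400 | pERK_ppMEK \<Rightarrow> 12810843 | RAF_RAFPH \<Rightarrow> (- 7519) | ppMEK_PH \<Rightarrow> 10295938 | pMEK_PH \<Rightarrow> 203765 | ppERK_PH \<Rightarrow> 12745725 | pERK_PH \<Rightarrow> 14057725 | _ \<Rightarrow> 0) | ppMEK \<Rightarrow> (case b of ppMEK \<Rightarrow> 24904581 | pERK \<Rightarrow> 20961075 | ppERK \<Rightarrow>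 3564448 | RAS_RAF \<Rightarrow> 296107 | MEK_pRAF \<Rightarrow> 36695 | pMEK_pRAF \<Rightarrow> 16628440 | ERK_ppMEK \<Rightarrow> 34954132 | pERK_ppMEK \<Rightarrow> 30625101 | RAF_RAFPH \<Rightarrow> 3198 | ppMEK_PH \<Rightarrow> 24850874 | pMEK_PH \<Rightarrow> (- 43046) | ppERK_PH \<Rightarrow> 30718633 | pERK_PH \<Rightarrow> 34617586 | _ \<Rightarrow> 0) | pERK \<Rightarrow> (case b of pERK \<Rightarrow> 18320575 | ppERK \<Rightarrow> (- 7920992) | RAS_RAF \<Rightarrow> 200966 | MEK_pRAF \<Rightarrow> 2608 | pMEK_pRAF \<Rightarrow> 9774 | ERK_ppMEK \<Rightarrow> 10383661 | pERK_ppMEK \<Rightarrow> 5124829 | RAF_RAFPH \<Rightarrow> 779 | ppMEK_PH \<Rightarrow> (- 32186) | pMEK_PH \<Rightarrow> (- 4) | ppERK_PH \<Rightarrow> 12671533 | pERK_PH \<Rightarrow> 14986525 | _ \<Rightarrow> 0) | ppERK \<Rightarrow> (case b of ppERK \<Rightarrow> 87616847 | RAS_RAF \<Rightarrow> (- 8442) | MEK_pRAF \<Rightarrow> 860 | pMEK_pRAF \<Rightarrow> (- 74) | ERK_ppMEK \<Rightarrow> (- 914351) | pERK_ppMEK \<Rightarrow> (- 4960044) | RAF_RAFPH \<Rightarrow> 11 | ppMEK_PH \<Rightarrow> 284115 | pMEK_PH \<Rightarrow> 7 | ppERK_PH \<Rightarrow> 26396389 | pERK_PH \<Rightarrow> 2099350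 | _ \<Rightarrow> 0) | RAS_RAF \<Rightarrow> (case b of RAS_RAF \<Rightarrow> 3498937 | MEK_pRAF \<Rightarrow> 46 | pMEK_pRAF \<Rightarrow> 671 | ERK_ppMEK \<Rightarrow> 392550 | pERK_ppMEK \<Rightarrow> (- 525172) | RAF_RAFPH \<Rightarrow> (- 129) | ppMEK_PH \<Rightarrow> (- 5671) | pMEK_PH \<Rightarrow> (- 1) | ppERK_PH \<Rightarrow> 115242 | pERK_PH \<Rightarrow> 184607 | _ \<Rightarrow> 0) | MEK_pRAF \<Rightarrow> (case b of MEK_pRAF \<Rightarrow> 236639 | pMEK_pRAF \<Rightarrow> 107917 | ERK_ppMEK \<Rightarrow> 13039 | pERK_ppMEK \<Rightarrow> (- 4128) | RAF_RAFPH \<Rightarrow> 64919 | ppMEK_PH \<Rightarrow> (- 28029) | pMEK_PH \<Rightarrow> 406 | ppERK_PH \<Rightarrow> 49523 | pERK_PH \<Rightarrow> 45778 | _ \<Rightarrow> 0) | pMEK_pRAF \<Rightarrow> (case b of pMEK_pRAF \<Rightarrow> 647428 | ERK_ppMEK \<Rightarrow> 281207 | pERK_ppMEK \<Rightarrow> (- 61920) | RAF_RAFPH \<Rightarrow> 28441 | ppMEK_PH \<Rightarrow> 150707 | pMEK_PH \<Rightarrow> (- 1750) | ppERK_PH \<Rightarrow> 186411 | pERK_PH \<Rightarrow> 296517 | _ \<Rightarrow> 0) | ERK_ppMEK \<Rightarrow> (case b of ERK_ppMEK \<Rightarrow> 10744934 | pERK_ppMEK \<Rightarrow> (- 9076887)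 | RAF_RAFPH \<Rightarrow> (- 282) | ppMEK_PH \<Rightarrow> (- 192400) | ppERK_PH \<Rightarrow> 1983088 | pERK_PH \<Rightarrow> 3104318 | _ \<Rightarrow> 0) | pERK_ppMEK \<Rightarrow> (case b of pERK_ppMEK \<Rightarrow> 14429246 | RAF_RAFPH \<Rightarrow> (- 537) | ppMEK_PH \<Rightarrow> (- 291954) | pMEK_PH \<Rightarrow> 1 | ppERK_PH \<Rightarrow> 966081 | pERK_PH \<Rightarrow> 1730333 | _ \<Rightarrow> 0) | RAF_RAFPH \<Rightarrow> (case b of RAF_RAFPH \<Rightarrow> 172798 | ppMEK_PH \<Rightarrow> (- 18551) | pMEK_PH \<Rightarrow> (- 163) | ppERK_PH \<Rightarrow> (- 40415) | pERK_PH \<Rightarrow> (- 52300) | _ \<Rightarrow> 0) | ppMEK_PH \<Rightarrow> (case b of ppMEK_PH \<Rightarrow> 1467339 | pMEK_PH \<Rightarrow> (- 22) | ppERK_PH \<Rightarrow> (- 381517) | pERK_PH \<Rightarrow> (- 838077) | _ \<Rightarrow> 0) | pMEK_PH \<Rightarrow> (case b of pMEK_PH \<Rightarrow> 1771 | ppERK_PH \<Rightarrow> 54138 | pERK_PH \<Rightarrow> 59382 | _ \<Rightarrow> 0) | ppERK_PH \<Rightarrow> (case b of ppERK_PH \<Rightarrow> 6241603 | pERK_PH \<Rightarrow> 1552441 | _ \<Rightarrow> 0) | pERK_PH \<Rightarrow> (case b of pERK_PH \<Rightarrow> 6535034 | _ \<Rightarrow> 0) | _ \<Rightarrow> 0)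"

definition AY :: "species \<Rightarrow> species \<Rightarrow> real" where
  "AY a b = (case a of pRAF \<Rightarrow> (case b of pRAF \<Rightarrow> (- 46621360000) | pMEK \<Rightarrow> 60000000000 | ppMEK \<Rightarrow> 96000000000 | RAS_RAF \<Rightarrow> 15360000 | MEK_pRAF \<Rightarrow> 104649705000 | pMEK_pRAF \<Rightarrow> 119040000000 | ERK_ppMEK \<Rightarrow> 96000000000 | pERK_ppMEK \<Rightarrow> 96000000000 | RAF_RAFPH \<Rightarrow> 229440000000 | ppMEK_PH \<Rightarrow> 96000000000 | pMEK_PH \<Rightarrow> 96000000000 | _ \<Rightarrow> 0) | pMEK \<Rightarrow> (case b of pRAF \<Rightarrow> (- 28800000) | pMEK \<Rightarrow> (- 13859232000000) | MEK_pRAF \<Rightarrow> 1638400000 | pMEK_pRAF \<Rightarrow> 7680000000 | ppMEK_PH \<Rightarrow> 123033600000 | pMEK_PH \<Rightarrow> 166388480000 | ppERK_PH \<Rightarrow> 122880000000 | pERK_PH \<Rightarrow> 122880000000 | _ \<Rightarrow> 0) | ppMEK \<Rightarrow> (case b of ppMEK \<Rightarrow> (- 3225364047) | pERK \<Rightarrow> (- 19920000) | ppERK \<Rightarrow> 4080000 | pMEK_pRAF \<Rightarrow> 15360000000 | ERK_ppMEK \<Rightarrow> 67255349 | pERK_ppMEK \<Rightarrow> 4848000 | ppMEK_PH \<Rightarrow> 1703956800 | pMEK_PH \<Rightarrow> 1080000000 | ppERK_PH \<Rightarrow> 1084080000 | pERK_PH \<Rightarrow> 1084080000 | _ \<Rightarrow>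 0) | pERK \<Rightarrow> (case b of ppMEK \<Rightarrow> (- 120000000) | pERK \<Rightarrow> (- 75837120) | ERK_ppMEK \<Rightarrow> 40960000 | pERK_ppMEK \<Rightarrow> 614400 | ppMEK_PH \<Rightarrow> 96000000 | pMEK_PH \<Rightarrow> 96000000 | ppERK_PH \<Rightarrow> 249600000 | pERK_PH \<Rightarrow> 164152800 | _ \<Rightarrow> 0) | ppERK \<Rightarrow> (case b of ppERK \<Rightarrow> (- 1079940) | pERK_ppMEK \<Rightarrow> 153600 | ppMEK_PH \<Rightarrow> 12500000 | pMEK_PH \<Rightarrow> 12500000 | ppERK_PH \<Rightarrow> 74888000 | pERK_PH \<Rightarrow> 12500000 | _ \<Rightarrow> 0) | RAS_RAF \<Rightarrow> (case b of pRAF \<Rightarrow> (- 192000000) | RAS_RAF \<Rightarrow> (- 412192800) | MEK_pRAF \<Rightarrow> (- 192000000) | pMEK_pRAF \<Rightarrow> (- 192000000) | RAF_RAFPH \<Rightarrow> (- 192000000) | _ \<Rightarrow> 0) | MEK_pRAF \<Rightarrow> (case b of pRAF \<Rightarrow> 46131760000 | pMEK \<Rightarrow> (- 96000000000) | ppMEK \<Rightarrow> (- 96000000000) | MEK_pRAF \<Rightarrow> (- 104649705000) | pMEK_pRAF \<Rightarrow> (- 96000000000) | ERK_ppMEK \<Rightarrow> (- 96000000000) | pERK_ppMEK \<Rightarrow> (- 96000000000) | ppMEK_PH \<Rightarrow> (- 96000000000) | pMEK_PH \<Rightarrow> (- 96000000000) | _ \<Rightarrow> 0) | pMEK_pRAF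 \<Rightarrow> (case b of pRAF \<Rightarrow> 28800000 | pMEK \<Rightarrow> 36000000000 | pMEK_pRAF \<Rightarrow> (- 23040000000) | _ \<Rightarrow> 0) | ERK_ppMEK \<Rightarrow> (case b of ppMEK \<Rightarrow> 189526047 | pERK \<Rightarrow> (- 4080000) | ppERK \<Rightarrow> (- 4080000) | ERK_ppMEK \<Rightarrow> (- 67255349) | pERK_ppMEK \<Rightarrow> (- 4080000) | ppERK_PH \<Rightarrow> (- 4080000) | pERK_PH \<Rightarrow> (- 4080000) | _ \<Rightarrow> 0) | pERK_ppMEK \<Rightarrow> (case b of ppMEK \<Rightarrow> 120000000 | pERK \<Rightarrow> 24000000 | pERK_ppMEK \<Rightarrow> (- 768000) | _ \<Rightarrow> 0) | RAF_RAFPH \<Rightarrow> (case b of pRAF \<Rightarrow> 460800000 | RAF_RAFPH \<Rightarrow> (- 244800000000) | _ \<Rightarrow> 0) | ppMEK_PH \<Rightarrow> (case b of ppMEK \<Rightarrow> 2915838000 | ppMEK_PH \<Rightarrow> (- 1857556800) | pMEK_PH \<Rightarrow> (- 1080000000) | ppERK_PH \<Rightarrow> (- 1080000000) | pERK_PH \<Rightarrow> (- 1080000000) | _ \<Rightarrow> 0) | pMEK_PH \<Rightarrow> (case b of pMEK \<Rightarrow> 13823232000000 | ppMEK_PH \<Rightarrow> (- 122880000000) | pMEK_PH \<Rightarrow> (- 330228480000) | ppERK_PH \<Rightarrow> (- 122880000000) | pERK_PH \<Rightarrow> (- 122880000000) | _ \<Rightarrow> 0) | ppERK_PH \<Rightarrow>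 (case b of ppERK \<Rightarrow> 1079940 | ppMEK_PH \<Rightarrow> (- 12500000) | pMEK_PH \<Rightarrow> (- 12500000) | ppERK_PH \<Rightarrow> (- 228488000) | pERK_PH \<Rightarrow> (- 12500000) | _ \<Rightarrow> 0) | pERK_PH \<Rightarrow> (case b of pERK \<Rightarrow> 51837120 | ppMEK_PH \<Rightarrow> (- 96000000) | pMEK_PH \<Rightarrow> (- 96000000) | ppERK_PH \<Rightarrow> (- 96000000) | pERK_PH \<Rightarrow> (- 225592800) | _ \<Rightarrow> 0) | _ \<Rightarrow> 0)"

definition NY :: "species \<Rightarrow> species \<Rightarrow> real" where
  "NY a b = (case a of pRAF \<Rightarrow> (case b of pRAF \<Rightarrow> (- 10062371653300351680000) | pMEK \<Rightarrow> 2337320296529280000000 | ppMEK \<Rightarrow> (- 5278752727908327432000) | pERK \<Rightarrow> (- 2706785093844226252800) | ppERK \<Rightarrow> (- 4643844822020350800000) | RAS_RAF \<Rightarrow> 4685403394332873216000 | MEK_pRAF \<Rightarrow> 3917342779616853540000 | pMEK_pRAF \<Rightarrow> 4004192039592960000000 | ERK_ppMEK \<Rightarrow> (- 4273525137926979816000) | pERK_ppMEK \<Rightarrow> (- 8412123179911449600000) | RAF_RAFPH \<Rightarrow> 7867880920316160000000 | ppMEK_PH \<Rightarrow> (- 5274340318992676992000) | pMEK_PH \<Rightarrow> 1842084609252700800000 | ppERK_PH \<Rightarrow> (- 7600103925773280000000) | pERK_PH \<Rightarrow> (- 7709224560854621568000) | _ \<Rightarrow> 0) | pMEK \<Rightarrow>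 (case b of pRAF \<Rightarrow> (- 1849674474208637440000) | pMEK \<Rightarrow> (- 10061254656933696000000) | ppMEK \<Rightarrow> 3775763475921757202484 | pERK \<Rightarrow> 40431972115284756480 | ppERK \<Rightarrow> (- 24906930938570400360) | RAS_RAF \<Rightarrow> 1115578147810579200 | MEK_pRAF \<Rightarrow> 4423823358240659120000 | pMEK_pRAF \<Rightarrow> 4678448208526848000000 | ERK_ppMEK \<Rightarrow> 3915227897185636667172 | pERK_ppMEK \<Rightarrow> 3854188843271554752000 | RAF_RAFPH \<Rightarrow> 844280674005888000000 | ppMEK_PH \<Rightarrow> 4036980085096113841600 | pMEK_PH \<Rightarrow> (- 9700100209507373560000) | ppERK_PH \<Rightarrow> 202990762387255312000 | pERK_PH \<Rightarrow> 230126714894704628800 | _ \<Rightarrow> 0) | ppMEK \<Rightarrow> (case b of pRAF \<Rightarrow> 5279159170200519520000 | pMEK \<Rightarrow> (- 3477035832774720000000) | ppMEK \<Rightarrow> (- 10054392892215124446696) | pERK \<Rightarrow> 13225536037766869893120 | ppERK \<Rightarrow> (- 8036328894923655491040) | RAS_RAF \<Rightarrow> 318335007780238910400 | MEK_pRAF \<Rightarrow> 18048148587096988590000 | pMEK_pRAF \<Rightarrow> 16552942084062336000000 | ERK_ppMEK \<Rightarrow> 10959757271520818194232 | pERK_ppMEK \<Rightarrow> (- 8192935219885634534400) | RAF_RAFPH \<Rightarrow> 8115100756198656000000 | ppMEK_PH \<Rightarrow> (- 2198618204655420889600) | pMEK_PH \<Rightarrow> (- 3769368351613175200000) | ppERK_PH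 \<Rightarrow> 18190658809094282048000 | pERK_PH \<Rightarrow> 26047949151322946067200 | _ \<Rightarrow> 0) | pERK \<Rightarrow> (case b of pRAF \<Rightarrow> 2702582008352935520000 | pMEK \<Rightarrow> 347495348006400000000 | ppMEK \<Rightarrow> (- 13216583701369748729052) | pERK \<Rightarrow> (- 10060775594451181334400) | ppERK \<Rightarrow> (- 10349841229774814245920) | RAS_RAF \<Rightarrow> 125367752839934606400 | MEK_pRAF \<Rightarrow> 2718127921150043790000 | pMEK_pRAF \<Rightarrow> (- 6121171412110464000000) | ERK_ppMEK \<Rightarrow> (- 3761077139003624854316) | pERK_ppMEK \<Rightarrow> (- 25625524369590253324800) | RAF_RAFPH \<Rightarrow> 2532058169738496000000 | ppMEK_PH \<Rightarrow> (- 12884139740612106652800) | pMEK_PH \<Rightarrow> (- 15710569843116000000) | ppERK_PH \<Rightarrow> (- 2718703022780996736000) | pERK_PH \<Rightarrow> (- 6325853858562195144000) | _ \<Rightarrow> 0) | ppERK \<Rightarrow> (case b of pRAF \<Rightarrow> 4641109842372512000000 | pMEK \<Rightarrow> (- 761268745749504000000) | ppMEK \<Rightarrow> 8042070877704188107374 | pERK \<Rightarrow> 10349839386034911617280 | ppERK \<Rightarrow> (- 10060781330427732067920) | RAS_RAF \<Rightarrow> 173548570501933430400 | MEK_pRAF \<Rightarrow> 4650241555222302800000 | pMEK_pRAF \<Rightarrow> 10015410787182336000000 | ERK_ppMEK \<Rightarrow> 15161137553501971885542 | pERK_ppMEK \<Rightarrow> 8115892339162963027200 | RAF_RAFPH \<Rightarrow>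 4340271346141056000000 | ppMEK_PH \<Rightarrow> 8022414590201398649600 | pMEK_PH \<Rightarrow> 35059323543628560000 | ppERK_PH \<Rightarrow> 15939490427309321024000 | pERK_PH \<Rightarrow> 15089716486653482556800 | _ \<Rightarrow> 0) | RAS_RAF \<Rightarrow> (case b of pRAF \<Rightarrow> (- 4685317663080248160000) | pMEK \<Rightarrow> 53025633086016000000 | ppMEK \<Rightarrow> (- 318479053282377724746) | pERK \<Rightarrow> (- 125348163684553029120) | ppERK \<Rightarrow> (- 173553196186941030360) | RAS_RAF \<Rightarrow> (- 10060781683439013235200) | MEK_pRAF \<Rightarrow> (- 4685007677009263470000) | pMEK_pRAF \<Rightarrow> (- 4894087281228288000000) | ERK_ppMEK \<Rightarrow> (- 302882601985191942418) | pERK_ppMEK \<Rightarrow> (- 442278587473788768000) | RAF_RAFPH \<Rightarrow> (- 4391964784019328000000) | ppMEK_PH \<Rightarrow> (- 319065820925712084800) | pMEK_PH \<Rightarrow> (- 1984372952519240000) | ppERK_PH \<Rightarrow> (- 307672403019597488000) | pERK_PH \<Rightarrow> (- 319997222014634667200) | _ \<Rightarrow> 0) | MEK_pRAF \<Rightarrow> (case b of pRAF \<Rightarrow> (- 3915315026339013760000) | pMEK \<Rightarrow> (- 3933394483454016000000) | ppMEK \<Rightarrow> (- 18037934870072110709688) | pERK \<Rightarrow> (- 2708556981294019163520) | ppERK \<Rightarrow> (- 4643986343733936043920) | RAS_RAF \<Rightarrow> 4684851085360332916800 | MEK_pRAF \<Rightarrow> (- 10057141340880114520000) | pMEK_pRAF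 \<Rightarrow> (- 10306235389074048000000) | ERK_ppMEK \<Rightarrow> (- 17032817391247915598104) | pERK_ppMEK \<Rightarrow> (- 21170447828373565363200) | RAF_RAFPH \<Rightarrow> (- 212413206094848000000) | ppMEK_PH \<Rightarrow> (- 18070168093300713033600) | pMEK_PH \<Rightarrow> (- 4374434024412883760000) | ppERK_PH \<Rightarrow> (- 7647740736094905696000) | pERK_PH \<Rightarrow> (- 7757607667653103051200) | _ \<Rightarrow> 0) | pMEK_pRAF \<Rightarrow> (case b of pRAF \<Rightarrow> (- 4004809784799077600000) | pMEK \<Rightarrow> (- 3986935687160640000000) | ppMEK \<Rightarrow> (- 16540403757946912250376) | pERK \<Rightarrow> 6128493157210481525760 | ppERK \<Rightarrow> (- 10009530554147504535600) | RAS_RAF \<Rightarrow> 4893913514760034276800 | MEK_pRAF \<Rightarrow> 10317415678663536250000 | pMEK_pRAF \<Rightarrow> (- 10054511312976768000000) | ERK_ppMEK \<Rightarrow> (- 2153585182841314779208) | pERK_ppMEK \<Rightarrow> (- 19055126247764421811200) | RAF_RAFPH \<Rightarrow> 629092723210752000000 | ppMEK_PH \<Rightarrow> (- 12040928775705437939200) | pMEK_PH \<Rightarrow> (- 4678814357458528400000) | ppERK_PH \<Rightarrow> 4499286580542116960000 | pERK_PH \<Rightarrow> 9633012537702957065600 | _ \<Rightarrow> 0) | ERK_ppMEK \<Rightarrow> (case b of pRAF \<Rightarrow> 4271394413747776480000 | pMEK \<Rightarrow> (- 3304023724430016000000) | ppMEK \<Rightarrow> (- 10941810324696238338324) | pERK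 \<Rightarrow> 3769876719704014339200 | ppERK \<Rightarrow> (- 15155407012398808832280) | RAS_RAF \<Rightarrow> 302753241268091740800 | MEK_pRAF \<Rightarrow> 17048628418194670710000 | pMEK_pRAF \<Rightarrow> 2170365864436992000000 | ERK_ppMEK \<Rightarrow> (- 10049332572540754517892) | pERK_ppMEK \<Rightarrow> (- 26280210658252378713600) | RAF_RAFPH \<Rightarrow> 7169057862880512000000 | ppMEK_PH \<Rightarrow> (- 11358222778382662500800) | pMEK_PH \<Rightarrow> (- 3875055221038234760000) | ppERK_PH \<Rightarrow> 832175249582834416000 | pERK_PH \<Rightarrow> 6664667669794197712000 | _ \<Rightarrow> 0) | pERK_ppMEK \<Rightarrow> (case b of pRAF \<Rightarrow> 8411926916095162720000 | pMEK \<Rightarrow> (- 3631169378858688000000) | ppMEK \<Rightarrow> 8206705696659589616574 | pERK \<Rightarrow> 25634319739003319370240 | ppERK \<Rightarrow> (- 8110158247274969373000) | RAS_RAF \<Rightarrow> 442137965574748564800 | MEK_pRAF \<Rightarrow> 21181819805184105390000 | pMEK_pRAF \<Rightarrow> 19068331429629312000000 | ERK_ppMEK \<Rightarrow> 26299020365844403661142 | pERK_ppMEK \<Rightarrow> (- 10053416352671021433600) | RAF_RAFPH \<Rightarrow> 11056095184620672000000 | ppMEK_PH \<Rightarrow> 7984634133822660296000 | pMEK_PH \<Rightarrow> (- 3843442817957606680000) | ppERK_PH \<Rightarrow> 28018394828728817840000 | pERK_PH \<Rightarrow> 34308893129204539294400 | _ \<Rightarrow> 0) | RAF_RAFPH \<Rightarrow>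 (case b of pRAF \<Rightarrow> (- 7873366081743542240000) | pMEK \<Rightarrow> (- 386780223460608000000) | ppMEK \<Rightarrow> (- 8115269668620073934370) | pERK \<Rightarrow> (- 2537894215358214577920) | ppERK \<Rightarrow> (- 4352358135105494754720) | RAS_RAF \<Rightarrow> 4391419272737713819200 | MEK_pRAF \<Rightarrow> 211877963612373370000 | pMEK_pRAF \<Rightarrow> (- 632368097649792000000) | ERK_ppMEK \<Rightarrow> (- 7174571200447031987210) | pERK_ppMEK \<Rightarrow> (- 11052715214783687750400) | RAF_RAFPH \<Rightarrow> (- 10064475453693312000000) | ppMEK_PH \<Rightarrow> (- 8100194616808618342400) | pMEK_PH \<Rightarrow> (- 861019117852454880000) | ppERK_PH \<Rightarrow> (- 7112243623568125856000) | pERK_PH \<Rightarrow> (- 7214967097382849715200) | _ \<Rightarrow> 0) | ppMEK_PH \<Rightarrow> (case b of pRAF \<Rightarrow> 5270340650781023840000 | pMEK \<Rightarrow> (- 3757969959235392000000) | ppMEK \<Rightarrow> 2208583493582984770602 | pERK \<Rightarrow> 12889471190718587640960 | ppERK \<Rightarrow> (- 8009631685734275861640) | RAS_RAF \<Rightarrow> 318442145236794129600 | MEK_pRAF \<Rightarrow> 18075962347345620830000 | pMEK_pRAF \<Rightarrow> 12047175440759424000000 | ERK_ppMEK \<Rightarrow> 11370442141821920992466 | pERK_ppMEK \<Rightarrow> (- 7973020686140515795200) | RAF_RAFPH \<Rightarrow> 8095939283065344000000 | ppMEK_PH \<Rightarrow> (- 10057030536448705300800) | pMEK_PH \<Rightarrow>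 (- 3843238684820012120000) | ppERK_PH \<Rightarrow> 14301682500879403248000 | pERK_PH \<Rightarrow> 22207807318499852937600 | _ \<Rightarrow> 0) | pMEK_PH \<Rightarrow> (case b of pRAF \<Rightarrow> (- 1848587897805035520000) | pMEK \<Rightarrow> 9699123630200256000000 | ppMEK \<Rightarrow> 3769803038585358707868 | pERK \<Rightarrow> 17514181600991498880 | ppERK \<Rightarrow> (- 10998849626643528960) | RAS_RAF \<Rightarrow> 572638498975972800 | MEK_pRAF \<Rightarrow> 4367905787897934160000 | pMEK_pRAF \<Rightarrow> 4672497936746112000000 | ERK_ppMEK \<Rightarrow> 3874841504618031056044 | pERK_ppMEK \<Rightarrow> 3846888659818216204800 | RAF_RAFPH \<Rightarrow> 854859287592192000000 | ppMEK_PH \<Rightarrow> 3844106501407080054400 | pMEK_PH \<Rightarrow> (- 10060794284094867840000) | ppERK_PH \<Rightarrow> (- 3958878675710528000) | pERK_PH \<Rightarrow> 9587678084396612800 | _ \<Rightarrow> 0) | ppERK_PH \<Rightarrow> (case b of pRAF \<Rightarrow> 7589906619783053120000 | pMEK \<Rightarrow> 62648089204416000000 | ppMEK \<Rightarrow> (- 18180821292642866669988) | pERK \<Rightarrow> 2715276908789869559040 | ppERK \<Rightarrow> (- 15932433939743232927360) | RAS_RAF \<Rightarrow> 307211377363794273600 | MEK_pRAF \<Rightarrow> 7656761645975257140000 | pMEK_pRAF \<Rightarrow> (- 4495025190688896000000) | ERK_ppMEK \<Rightarrow> (- 825320473897471662004) | pERK_ppMEK \<Rightarrow> (- 28008094258588588684800)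 | RAF_RAFPH \<Rightarrow> 7097709851042304000000 | ppMEK_PH \<Rightarrow> (- 14294248035095371718400) | pMEK_PH \<Rightarrow> 12424461456101760000 | ppERK_PH \<Rightarrow> (- 10063104682796073408000) | pERK_PH \<Rightarrow> 4982378796418552502400 | _ \<Rightarrow> 0) | pERK_PH \<Rightarrow> (case b of pRAF \<Rightarrow> 7699134914437551360000 | pMEK \<Rightarrow> 335477191607040000000 | ppMEK \<Rightarrow> (- 26038305109628788996554) | pERK \<Rightarrow> 6322432432399361064960 | ppERK \<Rightarrow> (- 15082664024741860918800) | RAS_RAF \<Rightarrow> 319540827969639979200 | MEK_pRAF \<Rightarrow> 7766383071890207120000 | pMEK_pRAF \<Rightarrow> (- 9629278052848512000000) | ERK_ppMEK \<Rightarrow> (- 6658031249702789246482) | pERK_ppMEK \<Rightarrow> (- 34298814617044638662400) | RAF_RAFPH \<Rightarrow> 7202929357913088000000 | ppMEK_PH \<Rightarrow> (- 22203285657730430870400) | pMEK_PH \<Rightarrow> (- 8039684690183600000) | ppERK_PH \<Rightarrow> (- 4989709725972329280000) | pERK_PH \<Rightarrow> (- 10065787743086197862400) | _ \<Rightarrow> 0) | _ \<Rightarrow> 0)"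

definition DY :: real where "DY = 102400000"

definition muY :: real where "muY = 355358274"

definition qmY :: real where "qmY = 10000000088161161"

lemma ss_Y: "positive_steady_state kk xsY"
  unfolding positive_steady_state_def
proof
  show "\<forall>s. 0 < xsY $ s" by (simp add: xsY_def split: species.split)
  show "fld kk xsY = 0"
    unfolding vec_eq_iff
  proof
    fix s show "fld kk xsY $ s = 0 $ s"
      by (cases s) (simp_all add: fld_simps kk_vals xsY_def)
  qed
qed

lemma lin_Y:
  assumes "a \<in> REDs" "v \<in> Kset"
  shows "fld kk (xsY + v) $ a = (\<Sum>c\<in>UNIV. AY a c * v$c) / DY + quadf kk v $ a"
proof -
  note e = assms(2)[unfolded Kset_def, simplified]
  show ?thesis using assms(1) unfolding REDs_def sum_UNIV_species
    by (auto simp: e fld_simps quadf_simps kk_vals xsY_def AY_def DY_def field_simps)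
qed

lemma Qdef_Y: "QY a b = (\<Sum>k\<in>UNIV. RY k a * RY k b) + (if a = b \<and> a \<in> REDs then muY else 0)"
  unfolding sum_UNIV_species by (cases a; cases b) (simp_all add: QY_def RY_def REDs_def muY_def)

lemma Rsupp_Y: "a \<notin> REDs \<Longrightarrow> RY k a = 0"
  by (cases a; cases k) (simp_all add: RY_def REDs_def)

lemma qmb_Y: "\<bar>QY a b\<bar> \<le> qmY"
  by (cases a; cases b) (simp_all add: QY_def qmY_def)

lemma Nt_Y: "2 * (\<Sum>a\<in>UNIV. QY a b * AY a c) = NY b c"
  unfolding sum_UNIV_species by (cases b; cases c) (simp_all add: QY_def AY_def NY_def)

lemma dom_Y: "NY b b + (\<Sum>c\<in>UNIV-{b}. \<bar>NY b c + NY c b\<bar> / 2) \<le> (if b \<in> REDs then -1 else 0)"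
  by (cases b) (simp_all add: sum_diff1 sum_UNIV_species NY_def REDs_def)

lemma stable_Y: "asympt_stable kk xsY"
  by (rule cert_stable[OF kk_nonneg lin_Y _ Qdef_Y Rsupp_Y _ qmb_Y Nt_Y dom_Y]) (simp_all add: DY_def muY_def)

definition cc :: "nat \<Rightarrow> real" where
  "cc i = [(- (275241 / 6400)), 0, (- (755241 / 6400)), (3 / 40), 0, 0, (576647 / 6400), 0, (1536647 / 6400), (1546199 / 6400), 0, (4831 / 20), (279 / 64), 0, 0, (- (3 / 2)), 0, 0, (3716197 / 12800), 0, (3694597 / 12800), (3612197 / 12800), 0, (615197 / 12800), (2997 / 12800), 0, 0, (9 / 8), 0, 0] ! i"

lemma cc_vals: "cc 0 = (- (275241 / 6400))" "cc 1 = 0" "cc 2 = (- (755241 / 6400))" "cc 3 = (3 / 40)" "cc 4 = 0" "cc 5 = 0" "cc 6 = (576647 / 6400)" "cc 7 = 0" "cc 8 = (1536647 / 6400)" "cc 9 = (1546199 / 6400)" "cc 10 = 0" "cc 11 = (4831 / 20)" "cc 12 = (279 / 64)" "cc 13 = 0" "cc 14 = 0" "cc 15 = (- (3 / 2))" "cc 16 = 0" "cc 17 = 0" "cc 18 = (3716197 / 12800)" "cc 19 = 0" "cc 20 = (3694597 / 12800)" "cc 21 = (3612197 / 12800)" "cc 22 = 0" "cc 23 = (615197 / 12800)" "cc 24 = (2997 / 12800)" "cc 25 = 0" "cc 26 = 0" "cc 27 = (9 / 8)" "cc 28 = 0" "cc 29 = 0" "cc (Suc 0) = 0"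
  by (simp_all add: cc_def)

lemma diff_comb: "xsY - xsX = (\<Sum>i<30. cc i *\<^sub>R rvec i)"
  unfolding vec_eq_iff
proof
  fix s
  have "(\<Sum>i<30. cc i *\<^sub>R rvec i) $ s = (\<Sum>i\<leftarrow>[0..<30]. cc i * rvec i $ s)"
    by (simp add: sum_set_upt_conv_sum_list_nat[symmetric] atLeast_upt)
  then show "(xsY - xsX) $ s = (\<Sum>i<30. cc i *\<^sub>R rvec i) $ s"
    unfolding upt30 rvec_def cplx_def
    by (cases s) (simp_all add: erk_reactions_def cc_vals xsX_def xsY_def)
qed

lemma Y_compat: "xsY \<in> compat_class xsX"
proof -
  have "(\<Sum>i<30. cc i *\<^sub>R rvec i) \<in> stoich"
    unfolding stoich_def
    by (intro span_sum span_scale span_base) (auto simp: erk_reactions_def)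
  then show ?thesis unfolding compat_class_def using diff_comb ss_Y
    by (auto simp: positive_steady_state_def less_imp_le)
qed

lemma XY_ne: "xsX \<noteq> xsY"
proof
  assume "xsX = xsY"
  then have "xsX $ pRAF = xsY $ pRAF" by simp
  then show False by (simp add: xsX_def xsY_def)
qed

theorem mainTheorem4:
  shows "\<exists>k :: nat \<Rightarrow> real. (\<forall>i<30. 0 < k i) \<and>
           (\<exists>x y. x \<noteq> y \<and> y \<in> compat_class x \<and>
              positive_steady_state k x \<and> positive_steady_state k y \<and>
              asympt_stable k x \<and> asympt_stable k y)"
  using kk_pos XY_ne Y_compat ss_X ss_Y stable_X stable_Y by blast

end
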